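(* Let $a>0$. The vector space $\mathbb F=\{dF\in L^2(\mathbb H^2(-a^2)):F\text{ harmonic on }\mathbb H^2(-a^2)\}$ is a Banach space with respect to the norm $\|\cdot\|_{H^1(\mathbb H^2(-a^2))}$.
   Context: $\mathbb H^2(-a^2)$ is the two-dimensional hyperbolic space of constant curvature $-a^2$ with metric $g$, Levi-Civita connection $\overline\nabla$ and induced tensor metric $\overline g$. For a 1-form $u$, $\mathrm{Def}\,u=\frac12(\overline\nabla u+(\overline\nabla u)^T)$ and $\|u\|_{H^1}^2=\|u\|_{L^2}^2+2\|\mathrm{Def}\,u\|_{L^2}^2$. *)

theory Defs
  imports "HOL-Analysis.Analysis"
begin

text \<open>Upper half-plane model of H^2(-a^2): points (x,y) with y > 0 and metric
  g = (dx^2 + dy^2) / (a^2 y^2), which has constant curvature -a^2.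
  A 1-form u = u1 dx + u2 dy is represented by the pair of coefficient
  functions (u1, u2); it is taken to be 0 outside the half-plane.\<close>

definition Hpl :: "(real \<times> real) set" where
  "Hpl = {p. snd p > 0}"

definition pdx :: "(real \<times> real \<Rightarrow> real) \<Rightarrow> real \<times> real \<Rightarrow> real" where
  "pdx f p = frechet_derivative f (at p) (1, 0)"

definition pdy :: "(real \<times> real \<Rightarrow> real) \<Rightarrow> real \<times> real \<Rightarrow> real" where
  "pdy f p = frechet_derivative f (at p) (0, 1)"

definition lap_hyp :: "real \<Rightarrow> (real \<times> real \<Rightarrow> real) \<Rightarrow> real \<times> real \<Rightarrow> real" where
  "lap_hyp a F p = a\<^sup>2 * (snd p)\<^sup>2 * (pdx (pdx F) p + pdy (pdy F) p)"

definition harmonic_hyp :: "real \<Rightarrow> (real \<times> real \<Rightarrow> real) \<Rightarrow> bool" where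
  "harmonic_hyp a F \<longleftrightarrow>
     (\<forall>p\<in>Hpl. F differentiable (at p) \<and> pdx F differentiable (at p) \<and> pdy F differentiable (at p)) \<and>
     continuous_on Hpl (pdx (pdx F)) \<and> continuous_on Hpl (pdy (pdx F)) \<and>
     continuous_on Hpl (pdx (pdy F)) \<and> continuous_on Hpl (pdy (pdy F)) \<and>
     (\<forall>p\<in>Hpl. lap_hyp a F p = 0)"

definition dform :: "(real \<times> real \<Rightarrow> real) \<Rightarrow> real \<times> real \<Rightarrow> real \<times> real" where
  "dform F p = (if p \<in> Hpl then (pdx F p, pdy F p) else (0, 0))"

definition vol_hyp :: "real \<Rightarrow> real \<times> real \<Rightarrow> real" where
  "vol_hyp a p = 1 / (a\<^sup>2 * (snd p)\<^sup>2)"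

definition form_sq :: "real \<Rightarrow> (real \<times> real \<Rightarrow> real \<times> real) \<Rightarrow> real \<times> real \<Rightarrow> real" where
  "form_sq a u p = a\<^sup>2 * (snd p)\<^sup>2 * ((fst (u p))\<^sup>2 + (snd (u p))\<^sup>2)"

text \<open>Components of Def u = 1/2 (nabla u + (nabla u)^T), where
  (nabla u)_{ij} = d_i u_j - Gamma^k_{ij} u_k, with the Christoffel symbols of g:
  Gamma^k_{ij} u_k: (11) u2/y, (22) -u2/y, (12)=(21) -u1/y.\<close>
definition Def11 :: "(real \<times> real \<Rightarrow> real \<times> real) \<Rightarrow> real \<times> real \<Rightarrow> real" where
  "Def11 u p = pdx (\<lambda>q. fst (u q)) p - snd (u p) / snd p"
definition Def22 :: "(real \<times> real \<Rightarrow> real \<times> real) \<Rightarrow> real \<times> real \<Rightarrow> real" where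
  "Def22 u p = pdy (\<lambda>q. snd (u q)) p + snd (u p) / snd p"
definition Def12 :: "(real \<times> real \<Rightarrow> real \<times> real) \<Rightarrow> real \<times> real \<Rightarrow> real" where
  "Def12 u p = (pdx (\<lambda>q. snd (u q)) p + pdy (\<lambda>q. fst (u q)) p) / 2 + fst (u p) / snd p"

text \<open>Pointwise squared norm of the symmetric 2-tensor Def u:
  g^{ik} g^{jl} T_{ij} T_{kl} = (a y)^4 (T11^2 + 2 T12^2 + T22^2).\<close>
definition Def_sq :: "real \<Rightarrow> (real \<times> real \<Rightarrow> real \<times> real) \<Rightarrow> real \<times> real \<Rightarrow> real" where
  "Def_sq a u p = (a * snd p) ^ 4 * ((Def11 u p)\<^sup>2 + 2 * (Def12 u p)\<^sup>2 + (Def22 u p)\<^sup>2)"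

definition in_L2 :: "real \<Rightarrow> (real \<times> real \<Rightarrow> real \<times> real) \<Rightarrow> bool" where
  "in_L2 a u \<longleftrightarrow> set_integrable lborel Hpl (\<lambda>p. form_sq a u p * vol_hyp a p)"

definition L2sq :: "real \<Rightarrow> (real \<times> real \<Rightarrow> real \<times> real) \<Rightarrow> real" where
  "L2sq a u = (\<integral>p\<in>Hpl. form_sq a u p * vol_hyp a p \<partial>lborel)"

definition Def_in_L2 :: "real \<Rightarrow> (real \<times> real \<Rightarrow> real \<times> real) \<Rightarrow> bool" where
  "Def_in_L2 a u \<longleftrightarrow> set_integrable lborel Hpl (\<lambda>p. Def_sq a u p * vol_hyp a p)"

definition DefL2sq :: "real \<Rightarrow> (real \<times> real \<Rightarrow> real \<times> real) \<Rightarrow> real" where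
  "DefL2sq a u = (\<integral>p\<in>Hpl. Def_sq a u p * vol_hyp a p \<partial>lborel)"

definition H1norm :: "real \<Rightarrow> (real \<times> real \<Rightarrow> real \<times> real) \<Rightarrow> real" where
  "H1norm a u = sqrt (L2sq a u + 2 * DefL2sq a u)"

definition FF :: "real \<Rightarrow> (real \<times> real \<Rightarrow> real \<times> real) set" where
  "FF a = {dform F | F. harmonic_hyp a F \<and> in_L2 a (dform F)}"

end

theory Submission
  imports Defs "HOL-Complex_Analysis.Complex_Analysis"
begin


definition emb :: "real \<times> real \<Rightarrow> complex" where
  "emb p = Complex (fst p) (snd p)"

definition HH :: "complex set" where "HH = {z. Im z > 0}"

definition rep :: "(complex \<Rightarrow> complex) \<Rightarrow> (real \<times> real \<Rightarrow> real \<times> real) \<Rightarrow> bool" where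
  "rep h u \<longleftrightarrow> (\<forall>p. u p = (if p \<in> Hpl then (Re (h (emb p)), - Im (h (emb p))) else (0, 0)))"

lemma open_Hpl: "open Hpl"
  unfolding Hpl_def by (intro open_Collect_less continuous_intros)

lemma open_HH: "open HH"
  unfolding HH_def by (simp add: open_halfspace_Im_gt)

lemma emb_simps [simp]: "Re (emb p) = fst p" "Im (emb p) = snd p"
  by (auto simp: emb_def)

lemma emb_in_HH [simp]: "emb p \<in> HH \<longleftrightarrow> p \<in> Hpl"
  by (simp add: HH_def Hpl_def)

lemma bounded_linear_emb: "bounded_linear emb"
proof -
  have "linear emb"
    by (rule linearI) (auto simp: emb_def complex_eq_iff)
  then show ?thesis using linear_conv_bounded_linear by blast
qed

lemma continuous_on_emb: "continuous_on S emb"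
  using bounded_linear_emb linear_continuous_on by blast

lemma emb_10 [simp]: "emb (1, 0) = 1" and emb_01 [simp]: "emb (0, 1) = \<i>"
  by (auto simp: emb_def complex_eq_iff)

lemma hol_comp_emb_deriv:
  assumes "h holomorphic_on HH" "p \<in> Hpl"
  shows "((\<lambda>q. h (emb q)) has_derivative (\<lambda>v. deriv h (emb p) * emb v)) (at p)"
proof -
  have "(h has_field_derivative deriv h (emb p)) (at (emb p))"
    using assms open_HH holomorphic_derivI by fastforce
  then have "(h has_derivative (\<lambda>w. deriv h (emb p) * w)) (at (emb p))"
    by (simp add: has_field_derivative_def)
  moreover have "(emb has_derivative emb) (at p)"
    using bounded_linear_emb bounded_linear_imp_has_derivative by blast
  ultimately show ?thesis
    using has_derivative_compose[of emb emb p UNIV h] by (simp add: o_def)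
qed

lemma Re_comp_deriv:
  assumes "h holomorphic_on HH" "p \<in> Hpl"
  shows "((\<lambda>q. Re (h (emb q))) has_derivative (\<lambda>v. Re (deriv h (emb p) * emb v))) (at p)"
  using bounded_linear.has_derivative[OF bounded_linear_Re hol_comp_emb_deriv[OF assms]] .

lemma Im_comp_deriv:
  assumes "h holomorphic_on HH" "p \<in> Hpl"
  shows "((\<lambda>q. Im (h (emb q))) has_derivative (\<lambda>v. Im (deriv h (emb p) * emb v))) (at p)"
  using bounded_linear.has_derivative[OF bounded_linear_Im hol_comp_emb_deriv[OF assms]] .

lemma pd_local:
  assumes "(g has_derivative g') (at p)" "p \<in> Hpl" "\<And>q. q \<in> Hpl \<Longrightarrow> f q = g q"
  shows "pdx f p = g' (1,0)" "pdy f p = g' (0,1)" "f differentiable (at p)"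
proof -
  have "(f has_derivative g') (at p)"
    using has_derivative_transform_within_open[OF assms(1) open_Hpl assms(2)] assms(3) by metis
  then show "pdx f p = g' (1,0)" "pdy f p = g' (0,1)" "f differentiable (at p)"
    using frechet_derivative_at unfolding pdx_def pdy_def differentiable_def by metis+
qed

lemma pd_Re:
  assumes "h holomorphic_on HH" "p \<in> Hpl" "\<And>q. q \<in> Hpl \<Longrightarrow> f q = Re (h (emb q))"
  shows "pdx f p = Re (deriv h (emb p))" "pdy f p = - Im (deriv h (emb p))" "f differentiable (at p)"
  using pd_local[OF Re_comp_deriv[OF assms(1,2)] assms(2,3)] by auto

lemma pd_Im:
  assumes "h holomorphic_on HH" "p \<in> Hpl" "\<And>q. q \<in> Hpl \<Longrightarrow> f q = Im (h (emb q))"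
  shows "pdx f p = Im (deriv h (emb p))" "pdy f p = Re (deriv h (emb p))" "f differentiable (at p)"
  using pd_local[OF Im_comp_deriv[OF assms(1,2)] assms(2,3)] by auto

lemma rep_form:
  assumes "rep h u" "p \<in> Hpl"
  shows "form_sq a u p * vol_hyp a p = (if a = 0 then 0 else (cmod (h (emb p)))\<^sup>2)"
proof -
  have "u p = (Re (h (emb p)), - Im (h (emb p)))"
    using assms(1)[unfolded rep_def, rule_format, of p] assms(2) by simp
  then show ?thesis using assms(2)
    by (auto simp: form_sq_def vol_hyp_def Hpl_def cmod_power2 field_simps)
qed

lemma rep_Def:
  assumes "h holomorphic_on HH" "rep h u" "p \<in> Hpl"
  shows "Def_sq a u p * vol_hyp a p =
     2 * a\<^sup>2 * (cmod (complex_of_real (snd p) * deriv h (emb p) - \<i> * h (emb p)))\<^sup>2"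
proof -
  have u1: "\<And>q. q \<in> Hpl \<Longrightarrow> fst (u q) = Re (h (emb q))"
    and u2: "\<And>q. q \<in> Hpl \<Longrightarrow> snd (u q) = - Im (h (emb q))"
    using assms(2) by (auto simp: rep_def)
  have u2': "\<And>q. q \<in> Hpl \<Longrightarrow> snd (u q) = Im ((\<lambda>z. - h z) (emb q))" using u2 by simp
  have hm: "(\<lambda>z. - h z) holomorphic_on HH" using assms(1) by (simp add: holomorphic_on_minus)
  have dm: "deriv (\<lambda>z. - h z) (emb p) = - deriv h (emb p)"
  proof -
    have "(h has_field_derivative deriv h (emb p)) (at (emb p))"
      using assms open_HH holomorphic_derivI by fastforce
    then have "((\<lambda>z. - h z) has_field_derivative - deriv h (emb p)) (at (emb p))"
      by (rule DERIV_minus)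
    then show ?thesis by (rule DERIV_imp_deriv)
  qed
  note A = pd_Re[OF assms(1) assms(3) u1] and B = pd_Im[OF hm assms(3) u2']
  have y: "snd p > 0" using assms(3) by (simp add: Hpl_def)
  define y where "y = snd p"
  define A1 where "A1 = Re (deriv h (emb p))"
  define A2 where "A2 = Im (deriv h (emb p))"
  define B1 where "B1 = Re (h (emb p))"
  define B2 where "B2 = Im (h (emb p))"
  have d: "Def11 u p = A1 + B2 / y" "Def22 u p = - A1 - B2 / y" "Def12 u p = - A2 + B1 / y"
    using A B dm u1[OF assms(3)] u2[OF assms(3)]
    by (auto simp: Def11_def Def22_def Def12_def A1_def A2_def B1_def B2_def y_def)
  have c: "(cmod (complex_of_real y * deriv h (emb p) - \<i> * h (emb p)))\<^sup>2
      = (y * A1 + B2)\<^sup>2 + (y * A2 - B1)\<^sup>2"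
    by (simp add: cmod_power2 A1_def A2_def B1_def B2_def)
  have yy: "y > 0" using y by (simp add: y_def)
  show ?thesis
  proof (cases "a = 0")
    case True then show ?thesis by (simp add: Def_sq_def vol_hyp_def)
  next
    case False
    then have "(a * y) ^ 4 * ((A1 + B2 / y)\<^sup>2 + 2 * (- A2 + B1 / y)\<^sup>2 + (- A1 - B2 / y)\<^sup>2) * (1 / (a\<^sup>2 * y\<^sup>2))
       = 2 * a\<^sup>2 * ((y * A1 + B2)\<^sup>2 + (y * A2 - B1)\<^sup>2)"
      using yy by (simp add: field_simps power2_eq_square) (simp add: algebra_simps power_def)
    then show ?thesis unfolding Def_sq_def vol_hyp_def y_def[symmetric] d c by simp
  qed
qed


lemma line_deriv_x:
  assumes "F differentiable (at (s, c))"
  shows "((\<lambda>t. F (t, c)) has_real_derivative pdx F (s, c)) (at s)"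
proof -
  let ?D = "frechet_derivative F (at (s, c))"
  have d: "(F has_derivative ?D) (at (s, c))" using assms frechet_derivative_works by blast
  have p: "((\<lambda>t::real. (t, c)) has_derivative (\<lambda>h. (h, 0))) (at s)"
    by (auto intro!: derivative_eq_intros)
  have "((\<lambda>t. F (t, c)) has_derivative (\<lambda>h. ?D (h, 0))) (at s)"
    using has_derivative_compose[OF p, of F ?D] d by (simp add: o_def)
  moreover have "\<And>h. ?D (h, 0) = pdx F (s, c) * h"
  proof -
    fix h :: real
    have "linear ?D" using d has_derivative_linear by blast
    from linear_scale[OF this, of h "(1, 0)"] have "?D (h *\<^sub>R (1, 0)) = h *\<^sub>R ?D (1, 0)" .
    then show "?D (h, 0) = pdx F (s, c) * h" by (simp add: pdx_def)
  qed
  ultimately show ?thesis by (simp add: has_field_derivative_def)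
qed

lemma line_deriv_y:
  assumes "F differentiable (at (c, s))"
  shows "((\<lambda>t. F (c, t)) has_real_derivative pdy F (c, s)) (at s)"
proof -
  let ?D = "frechet_derivative F (at (c, s))"
  have d: "(F has_derivative ?D) (at (c, s))" using assms frechet_derivative_works by blast
  have p: "((\<lambda>t::real. (c, t)) has_derivative (\<lambda>h. (0, h))) (at s)"
    by (auto intro!: derivative_eq_intros)
  have "((\<lambda>t. F (c, t)) has_derivative (\<lambda>h. ?D (0, h))) (at s)"
    using has_derivative_compose[OF p, of F ?D] d by (simp add: o_def)
  moreover have "\<And>h. ?D (0, h) = pdy F (c, s) * h"
  proof -
    fix h :: real
    have "linear ?D" using d has_derivative_linear by blast
    from linear_scale[OF this, of h "(0, 1)"] have "?D (h *\<^sub>R (0, 1)) = h *\<^sub>R ?D (0, 1)" .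
    then show "?D (0, h) = pdy F (c, s) * h" by (simp add: pdy_def)
  qed
  ultimately show ?thesis by (simp add: has_field_derivative_def)
qed

lemma Hpl_box:
  assumes "(x0, y0) \<in> Hpl" "0 \<le> s" "s \<le> t" "0 \<le> r" "r \<le> t" "t < y0"
  shows "(x0 + s, y0 + r) \<in> Hpl"
  using assms by (auto simp: Hpl_def)

lemma mixed_Delta:
  assumes diff: "\<forall>p\<in>Hpl. F differentiable (at p) \<and> pdx F differentiable (at p) \<and> pdy F differentiable (at p)"
    and p: "(x0, y0) \<in> Hpl" and t: "0 < t" "t < snd (x0, y0)"
  shows "\<exists>\<xi> \<eta>. x0 < \<xi> \<and> \<xi> < x0 + t \<and> y0 < \<eta> \<and> \<eta> < y0 + t \<and>
     F (x0 + t, y0 + t) - F (x0 + t, y0) - F (x0, y0 + t) + F (x0, y0) = t * t * pdy (pdx F) (\<xi>, \<eta>)"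
    and "\<exists>\<xi> \<eta>. x0 < \<xi> \<and> \<xi> < x0 + t \<and> y0 < \<eta> \<and> \<eta> < y0 + t \<and>
     F (x0 + t, y0 + t) - F (x0 + t, y0) - F (x0, y0 + t) + F (x0, y0) = t * t * pdx (pdy F) (\<xi>, \<eta>)"
proof -
  have inH: "\<And>u v. x0 \<le> u \<Longrightarrow> u \<le> x0 + t \<Longrightarrow> y0 \<le> v \<Longrightarrow> v \<le> y0 + t \<Longrightarrow> (u, v) \<in> Hpl"
    using p t by (auto simp: Hpl_def)
  obtain \<xi> where \<xi>: "x0 < \<xi>" "\<xi> < x0 + t"
    "(F (x0 + t, y0 + t) - F (x0 + t, y0)) - (F (x0, y0 + t) - F (x0, y0)) =
      t * (pdx F (\<xi>, y0 + t) - pdx F (\<xi>, y0))"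
  proof -
    have "\<And>s. x0 \<le> s \<Longrightarrow> s \<le> x0 + t \<Longrightarrow>
      ((\<lambda>s. F (s, y0 + t) - F (s, y0)) has_real_derivative (pdx F (s, y0 + t) - pdx F (s, y0))) (at s)"
      using diff inH t by (intro DERIV_diff line_deriv_x) auto
    from MVT2[of x0 "x0 + t", OF _ this] t show ?thesis using that by auto
  qed
  obtain \<eta> where \<eta>: "y0 < \<eta>" "\<eta> < y0 + t"
    "pdx F (\<xi>, y0 + t) - pdx F (\<xi>, y0) = t * pdy (pdx F) (\<xi>, \<eta>)"
  proof -
    have "\<And>s. y0 \<le> s \<Longrightarrow> s \<le> y0 + t \<Longrightarrow>
      ((\<lambda>s. pdx F (\<xi>, s)) has_real_derivative pdy (pdx F) (\<xi>, s)) (at s)"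
      using diff inH \<xi> by (intro line_deriv_y) auto
    from MVT2[of y0 "y0 + t", OF _ this] t show ?thesis using that by auto
  qed
  show "\<exists>\<xi> \<eta>. x0 < \<xi> \<and> \<xi> < x0 + t \<and> y0 < \<eta> \<and> \<eta> < y0 + t \<and>
     F (x0 + t, y0 + t) - F (x0 + t, y0) - F (x0, y0 + t) + F (x0, y0) = t * t * pdy (pdx F) (\<xi>, \<eta>)"
    using \<xi> \<eta> by (intro exI[of _ \<xi>] exI[of _ \<eta>]) (auto simp: algebra_simps)
  obtain \<eta>' where \<eta>': "y0 < \<eta>'" "\<eta>' < y0 + t"
    "(F (x0 + t, y0 + t) - F (x0, y0 + t)) - (F (x0 + t, y0) - F (x0, y0)) =
      t * (pdy F (x0 + t, \<eta>') - pdy F (x0, \<eta>'))"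
  proof -
    have "\<And>s. y0 \<le> s \<Longrightarrow> s \<le> y0 + t \<Longrightarrow>
      ((\<lambda>s. F (x0 + t, s) - F (x0, s)) has_real_derivative (pdy F (x0 + t, s) - pdy F (x0, s))) (at s)"
      using diff inH t by (intro DERIV_diff line_deriv_y) auto
    from MVT2[of y0 "y0 + t", OF _ this] t show ?thesis using that by auto
  qed
  obtain \<xi>' where \<xi>': "x0 < \<xi>'" "\<xi>' < x0 + t"
    "pdy F (x0 + t, \<eta>') - pdy F (x0, \<eta>') = t * pdx (pdy F) (\<xi>', \<eta>')"
  proof -
    have "\<And>s. x0 \<le> s \<Longrightarrow> s \<le> x0 + t \<Longrightarrow>
      ((\<lambda>s. pdy F (s, \<eta>')) has_real_derivative pdx (pdy F) (s, \<eta>')) (at s)"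
      using diff inH \<eta>' by (intro line_deriv_x) auto
    from MVT2[of x0 "x0 + t", OF _ this] t show ?thesis using that by auto
  qed
  show "\<exists>\<xi> \<eta>. x0 < \<xi> \<and> \<xi> < x0 + t \<and> y0 < \<eta> \<and> \<eta> < y0 + t \<and>
     F (x0 + t, y0 + t) - F (x0 + t, y0) - F (x0, y0 + t) + F (x0, y0) = t * t * pdx (pdy F) (\<xi>, \<eta>)"
    using \<xi>' \<eta>' by (intro exI[of _ \<xi>'] exI[of _ \<eta>']) (auto simp: algebra_simps)
qed

lemma mixed_symm:
  assumes diff: "\<forall>p\<in>Hpl. F differentiable (at p) \<and> pdx F differentiable (at p) \<and> pdy F differentiable (at p)"
    and c1: "continuous_on Hpl (pdy (pdx F))" and c2: "continuous_on Hpl (pdx (pdy F))"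
    and p: "p \<in> Hpl"
  shows "pdy (pdx F) p = pdx (pdy F) p"
proof (rule ccontr)
  assume ne: "pdy (pdx F) p \<noteq> pdx (pdy F) p"
  define e where "e = \<bar>pdy (pdx F) p - pdx (pdy F) p\<bar> / 2"
  have e: "e > 0" using ne by (simp add: e_def)
  obtain d1 where d1: "d1 > 0" "\<And>q. q \<in> Hpl \<Longrightarrow> dist q p < d1 \<Longrightarrow> dist (pdy (pdx F) q) (pdy (pdx F) p) < e"
    using c1 p e unfolding continuous_on_iff by metis
  obtain d2 where d2: "d2 > 0" "\<And>q. q \<in> Hpl \<Longrightarrow> dist q p < d2 \<Longrightarrow> dist (pdx (pdy F) q) (pdx (pdy F) p) < e"
    using c2 p e unfolding continuous_on_iff by metis
  obtain x0 y0 where xy: "p = (x0, y0)" by (cases p)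
  have y0: "y0 > 0" using p xy by (simp add: Hpl_def)
  define t where "t = Min {d1 / 2, d2 / 2, y0 / 2}"
  have t: "t > 0" "t < d1" "t < d2" "t < y0" "t < snd (x0, y0)"
    using d1 d2 y0 by (auto simp: t_def)
  have close: "\<And>u v. x0 < u \<Longrightarrow> u < x0 + t \<Longrightarrow> y0 < v \<Longrightarrow> v < y0 + t \<Longrightarrow>
      (u, v) \<in> Hpl \<and> dist (u, v) p < d1 \<and> dist (u, v) p < d2"
  proof -
    fix u v assume uv: "x0 < u" "u < x0 + t" "y0 < v" "v < y0 + t"
    have "dist (u, v) p = sqrt ((u - x0)\<^sup>2 + (v - y0)\<^sup>2)"
      by (simp add: xy dist_Pair_Pair dist_real_def)
    also have "\<dots> < sqrt (t\<^sup>2 + t\<^sup>2)"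
      using uv by (intro real_sqrt_less_mono add_strict_mono power_strict_mono) auto
    also have "\<dots> = sqrt 2 * t" using t by (simp add: real_sqrt_mult power2_eq_square)
    finally have "dist (u, v) p < sqrt 2 * t" .
    moreover have s2: "sqrt 2 * t \<le> 2 * t" using t sqrt2_less_2 by (intro mult_right_mono) auto
    moreover have "2 * t \<le> d1" "2 * t \<le> d2" by (auto simp: t_def Min_le_iff)
    ultimately have "dist (u, v) p < d1 \<and> dist (u, v) p < d2" by linarith
    then show "(u, v) \<in> Hpl \<and> dist (u, v) p < d1 \<and> dist (u, v) p < d2"
      using uv y0 by (auto simp: Hpl_def)
  qed
  have pH: "(x0, y0) \<in> Hpl" using p xy by simp
  obtain \<xi> \<eta> where A: "x0 < \<xi>" "\<xi> < x0 + t" "y0 < \<eta>" "\<eta> < y0 + t"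
    "F (x0 + t, y0 + t) - F (x0 + t, y0) - F (x0, y0 + t) + F (x0, y0) = t * t * pdy (pdx F) (\<xi>, \<eta>)"
    using mixed_Delta(1)[OF diff pH t(1) t(5)] by blast
  obtain \<xi>' \<eta>' where B: "x0 < \<xi>'" "\<xi>' < x0 + t" "y0 < \<eta>'" "\<eta>' < y0 + t"
    "F (x0 + t, y0 + t) - F (x0 + t, y0) - F (x0, y0 + t) + F (x0, y0) = t * t * pdx (pdy F) (\<xi>', \<eta>')"
    using mixed_Delta(2)[OF diff pH t(1) t(5)] by blast
  have eq: "pdy (pdx F) (\<xi>, \<eta>) = pdx (pdy F) (\<xi>', \<eta>')"
    using A(5) B(5) t by simp
  have "dist (pdy (pdx F) (\<xi>, \<eta>)) (pdy (pdx F) p) < e"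
    using close[OF A(1-4)] d1 by blast
  moreover have "dist (pdx (pdy F) (\<xi>', \<eta>')) (pdx (pdy F) p) < e"
    using close[OF B(1-4)] d2 by blast
  moreover have "\<And>X Y A B :: real. \<bar>X - A\<bar> < \<bar>A - B\<bar> / 2 \<Longrightarrow> \<bar>Y - B\<bar> < \<bar>A - B\<bar> / 2 \<Longrightarrow> X = Y \<Longrightarrow> False"
    by (simp add: abs_if split: if_splits)
  ultimately show False using eq unfolding e_def dist_real_def by blast
qed


lemma cont_comp_emb:
  assumes "continuous_on HH g"
  shows "continuous_on Hpl (\<lambda>p. g (emb p))"
  by (rule continuous_on_compose2[OF assms continuous_on_emb]) auto

lemma holo_derivs:
  assumes "h holomorphic_on HH"
  shows "deriv h holomorphic_on HH" "continuous_on HH (deriv h)" "continuous_on HH h"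
  using assms open_HH holomorphic_deriv holomorphic_on_imp_continuous_on by blast+

lemma hol_to_harm:
  assumes h: "h holomorphic_on HH"
  shows "\<exists>F. harmonic_hyp a F \<and> rep h (dform F)"
proof -
  obtain P where P: "\<And>x. x \<in> HH \<Longrightarrow> (P has_field_derivative h x) (at x within HH)"
    using holomorphic_convex_primitive'[of HH h] h open_HH convex_halfspace_Im_gt[of 0]
    by (auto simp: HH_def)
  have P': "\<And>x. x \<in> HH \<Longrightarrow> (P has_field_derivative h x) (at x)"
    using P open_HH at_within_open by metis
  have Phol: "P holomorphic_on HH" using P' open_HH holomorphic_on_open by blast
  have dP: "\<And>x. x \<in> HH \<Longrightarrow> deriv P x = h x" using P' DERIV_imp_deriv by blast
  define F where "F q = Re (P (emb q))" for q
  note hd = holo_derivs[OF h]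
  have ih: "(\<lambda>z. \<i> * h z) holomorphic_on HH" using h by (intro holomorphic_intros)
  have dih: "\<And>z. z \<in> HH \<Longrightarrow> deriv (\<lambda>z. \<i> * h z) z = \<i> * deriv h z"
  proof -
    fix z assume "z \<in> HH"
    then have "(h has_field_derivative deriv h z) (at z)" using h open_HH holomorphic_derivI by blast
    then have "((\<lambda>z. \<i> * h z) has_field_derivative \<i> * deriv h z) (at z)" by (rule DERIV_cmult)
    then show "deriv (\<lambda>z. \<i> * h z) z = \<i> * deriv h z" by (rule DERIV_imp_deriv)
  qed
  have Fx: "\<And>p. p \<in> Hpl \<Longrightarrow> pdx F p = Re (h (emb p))"
    and Fy: "\<And>p. p \<in> Hpl \<Longrightarrow> pdy F p = - Im (h (emb p))"
    and Fd: "\<And>p. p \<in> Hpl \<Longrightarrow> F differentiable (at p)"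
    using pd_Re[OF Phol _, of _ F] dP by (auto simp: F_def)
  have Fy': "\<And>p. p \<in> Hpl \<Longrightarrow> pdy F p = Re (\<i> * h (emb p))" using Fy by simp
  have Fxx: "\<And>p. p \<in> Hpl \<Longrightarrow> pdx (pdx F) p = Re (deriv h (emb p))"
    and Fxy: "\<And>p. p \<in> Hpl \<Longrightarrow> pdy (pdx F) p = - Im (deriv h (emb p))"
    and Fxd: "\<And>p. p \<in> Hpl \<Longrightarrow> pdx F differentiable (at p)"
    using pd_Re[OF h _ Fx] by auto
  have Fyx: "\<And>p. p \<in> Hpl \<Longrightarrow> pdx (pdy F) p = - Im (deriv h (emb p))"
    and Fyy: "\<And>p. p \<in> Hpl \<Longrightarrow> pdy (pdy F) p = - Re (deriv h (emb p))"
    and Fyd: "\<And>p. p \<in> Hpl \<Longrightarrow> pdy F differentiable (at p)"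
    using pd_Re[OF ih _ Fy'] dih by auto
  have cR: "continuous_on Hpl (\<lambda>p. Re (deriv h (emb p)))" "continuous_on Hpl (\<lambda>p. - Im (deriv h (emb p)))"
    "continuous_on Hpl (\<lambda>p. - Re (deriv h (emb p)))"
    using cont_comp_emb[OF hd(2)] by (auto intro!: continuous_intros)
  have "continuous_on Hpl (pdx (pdx F))" by (rule continuous_on_eq[OF cR(1)]) (simp add: Fxx)
  moreover have "continuous_on Hpl (pdy (pdx F))" by (rule continuous_on_eq[OF cR(2)]) (simp add: Fxy)
  moreover have "continuous_on Hpl (pdx (pdy F))" by (rule continuous_on_eq[OF cR(2)]) (simp add: Fyx)
  moreover have "continuous_on Hpl (pdy (pdy F))" by (rule continuous_on_eq[OF cR(3)]) (simp add: Fyy)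
  ultimately have "harmonic_hyp a F"
    unfolding harmonic_hyp_def lap_hyp_def
    using Fd Fxd Fyd Fxx Fyy by auto
  moreover have "rep h (dform F)"
    unfolding rep_def dform_def using Fx Fy by auto
  ultimately show ?thesis by blast
qed

definition unemb :: "complex \<Rightarrow> real \<times> real" where "unemb z = (Re z, Im z)"

lemma bounded_linear_unemb: "bounded_linear unemb"
proof -
  have "linear unemb" by (rule linearI) (auto simp: unemb_def)
  then show ?thesis using linear_conv_bounded_linear by blast
qed

lemma emb_unemb [simp]: "emb (unemb z) = z" and unemb_emb [simp]: "unemb (emb p) = p"
  by (auto simp: emb_def unemb_def complex_eq_iff)

lemma linear_pair_decomp:
  fixes L :: "real \<times> real \<Rightarrow> real" and u v :: real
  assumes "linear L"
  shows "L (u, v) = u * L (1, 0) + v * L (0, 1)"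
proof -
  have "(u, v) = u *\<^sub>R (1::real, 0::real) + v *\<^sub>R (0, 1)" by simp
  then have "L (u, v) = L (u *\<^sub>R (1, 0) + v *\<^sub>R (0, 1))" by metis
  also have "\<dots> = L (u *\<^sub>R (1, 0)) + L (v *\<^sub>R (0, 1))" by (rule linear_add[OF assms])
  also have "\<dots> = u *\<^sub>R L (1, 0) + v *\<^sub>R L (0, 1)" by (simp only: linear_scale[OF assms])
  finally show ?thesis by simp
qed

lemma harm_to_hol:
  assumes a: "a > 0" and H: "harmonic_hyp a F"
  shows "\<exists>h. h holomorphic_on HH \<and> rep h (dform F)"
proof -
  define h where "h z = Complex (pdx F (unemb z)) (- pdy F (unemb z))" for z
  have diff: "\<forall>p\<in>Hpl. F differentiable (at p) \<and> pdx F differentiable (at p) \<and> pdy F differentiable (at p)"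
    and c1: "continuous_on Hpl (pdy (pdx F))" and c2: "continuous_on Hpl (pdx (pdy F))"
    and lap: "\<forall>p\<in>Hpl. lap_hyp a F p = 0"
    using H by (auto simp: harmonic_hyp_def)
  have "\<exists>c. (h has_field_derivative c) (at z)" if z: "z \<in> HH" for z
  proof -
    define p where "p = unemb z"
    have p: "p \<in> Hpl" using z by (simp add: p_def unemb_def HH_def Hpl_def)
    define U where "U = frechet_derivative (pdx F) (at p)"
    define V where "V = frechet_derivative (pdy F) (at p)"
    have dU: "(pdx F has_derivative U) (at p)" and dV: "(pdy F has_derivative V) (at p)"
      using diff p frechet_derivative_works unfolding U_def V_def by blast+
    have lU: "linear U" and lV: "linear V" using dU dV has_derivative_linear by blast+
    have du: "(unemb has_derivative unemb) (at z)"
      using bounded_linear_unemb bounded_linear_imp_has_derivative by blast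
    have dU': "((\<lambda>z. pdx F (unemb z)) has_derivative (\<lambda>w. U (unemb w))) (at z)"
      using has_derivative_compose[OF du, of "pdx F" U] dU by (simp add: o_def p_def)
    have dV': "((\<lambda>z. pdy F (unemb z)) has_derivative (\<lambda>w. V (unemb w))) (at z)"
      using has_derivative_compose[OF du, of "pdy F" V] dV by (simp add: o_def p_def)
    have hd: "(h has_derivative (\<lambda>w. complex_of_real (U (unemb w)) + \<i> * complex_of_real (- V (unemb w)))) (at z)"
    proof -
      have "h = (\<lambda>z. complex_of_real (pdx F (unemb z)) + \<i> * complex_of_real (- pdy F (unemb z)))"
        by (auto simp: h_def complex_eq_iff)
      moreover have "((\<lambda>z. complex_of_real (pdx F (unemb z)) + \<i> * complex_of_real (- pdy F (unemb z)))
          has_derivative (\<lambda>w. complex_of_real (U (unemb w)) + \<i> * complex_of_real (- V (unemb w)))) (at z)"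
        by (intro derivative_intros has_derivative_of_real dU' dV' has_derivative_mult_right)
      ultimately show ?thesis by simp
    qed
    have sym: "pdy (pdx F) p = pdx (pdy F) p" using mixed_symm[OF diff c1 c2 p] .
    have lp: "pdx (pdx F) p + pdy (pdy F) p = 0"
      using lap p a by (cases p) (auto simp: lap_hyp_def Hpl_def)
    define c where "c = Complex (U (1, 0)) (- V (1, 0))"
    have "(\<lambda>w. complex_of_real (U (unemb w)) + \<i> * complex_of_real (- V (unemb w))) = (*) c"
    proof
      fix w
      have "U (0, 1) = V (1, 0)" "V (0, 1) = - U (1, 0)"
        using sym lp by (auto simp: U_def V_def pdx_def pdy_def)
      then show "complex_of_real (U (unemb w)) + \<i> * complex_of_real (- V (unemb w)) = c * w"
        using linear_pair_decomp[OF lU, of "Re w" "Im w"] linear_pair_decomp[OF lV, of "Re w" "Im w"]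
        by (simp add: unemb_def c_def complex_eq_iff algebra_simps)
    qed
    with hd have "(h has_derivative (*) c) (at z)" by simp
    then have "(h has_field_derivative c) (at z)" by (simp add: has_field_derivative_def)
    then show ?thesis by blast
  qed
  then have "h holomorphic_on HH" using open_HH holomorphic_on_open by blast
  moreover have "rep h (dform F)"
    by (auto simp: rep_def dform_def h_def)
  ultimately show ?thesis by blast
qed


lemma contour_integral_linepath_same_Im:
  assumes "a < b"
  shows   "contour_integral (linepath (Complex a c) (Complex b c)) f =
           integral {a..b} (\<lambda>x. f (Complex x c))"
proof -
  define z z' where "z = Complex a c" and "z' = Complex b c"
  have "contour_integral (linepath z z') f =
         (z' - z) * integral {0..1} (\<lambda>x. f (linepath z z' x))"
    by (simp add: contour_integral_integral)
  also have "z' - z = of_real (b - a)"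
    by (simp add: z_def z'_def Complex_eq algebra_simps)
  also have "integral {0..1} (\<lambda>x. f (linepath z z' x)) =
             integral {0..1} (\<lambda>x. f (Complex (linepath a b x) c))"
    by (simp add: linepath_def Complex_eq scaleR_conv_of_real algebra_simps z_def z'_def)
  also have "\<dots> = integral {0..(b - a) / (b - a)} (\<lambda>x. f (Complex (a + (b - a) * x) c))"
    using \<open>a < b\<close> by (simp add: algebra_simps linepath_def)
  also have "{0..(b - a) / (b - a)} = (\<lambda>x. x / (b - a)) ` {0..b - a}"
    using \<open>a < b\<close> by simp
  also have "integral \<dots> (\<lambda>x. f (Complex (a + (b - a) * x) c)) =
             integral {a-a..b-a} (\<lambda>x. f (Complex (x + a) c)) / of_real (b - a)"
    using \<open>a < b\<close> by (subst integral_stretch_real) (auto simp: scaleR_conv_of_real add_ac)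
  also have "\<dots> = integral {a..b} (\<lambda>x. f (Complex x c)) / of_real (b - a)"
    by (subst integral_shift_real_ivl) (rule refl)
  finally show ?thesis
    using \<open>a < b\<close> by (simp add: z_def z'_def)
qed

lemma seg_bound_Im:
  assumes "a < b" and cont: "continuous_on (closed_segment (Complex a c) (Complex b c)) g"
    and bd: "\<And>x. x \<in> {a..b} \<Longrightarrow> cmod (g (Complex x c)) \<le> G x"
    and Gi: "G integrable_on {a..b}"
  shows "cmod (contour_integral (linepath (Complex a c) (Complex b c)) g) \<le> integral {a..b} G"
    "cmod (contour_integral (linepath (Complex b c) (Complex a c)) g) \<le> integral {a..b} G"
proof -
  have cc: "continuous_on {a..b} (\<lambda>x. g (Complex x c))"
  proof (rule continuous_on_compose2[OF cont])
    show "continuous_on {a..b} (\<lambda>x. Complex x c)" by (auto simp: Complex_eq intro!: continuous_intros)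
    show "(\<lambda>x. Complex x c) ` {a..b} \<subseteq> closed_segment (Complex a c) (Complex b c)"
      using assms(1) by (auto simp: closed_segment_same_Im closed_segment_eq_real_ivl)
  qed
  have "cmod (contour_integral (linepath (Complex a c) (Complex b c)) g) \<le> integral {a..b} G"
    unfolding contour_integral_linepath_same_Im[OF assms(1)]
    by (rule integral_norm_bound_integral[OF integrable_continuous_interval[OF cc] Gi bd])
  then show "cmod (contour_integral (linepath (Complex a c) (Complex b c)) g) \<le> integral {a..b} G"
    "cmod (contour_integral (linepath (Complex b c) (Complex a c)) g) \<le> integral {a..b} G"
    using contour_integral_reverse_linepath[of "Complex b c" "Complex a c" g] cont
    by (auto simp: closed_segment_commute)
qed

lemma seg_bound_Re:
  assumes "a < b" and cont: "continuous_on (closed_segment (Complex c a) (Complex c b)) g"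
    and bd: "\<And>x. x \<in> {a..b} \<Longrightarrow> cmod (g (Complex c x)) \<le> G x"
    and Gi: "G integrable_on {a..b}"
  shows "cmod (contour_integral (linepath (Complex c a) (Complex c b)) g) \<le> integral {a..b} G"
    "cmod (contour_integral (linepath (Complex c b) (Complex c a)) g) \<le> integral {a..b} G"
proof -
  have cc: "continuous_on {a..b} (\<lambda>x. g (Complex c x))"
  proof (rule continuous_on_compose2[OF cont])
    show "continuous_on {a..b} (\<lambda>x. Complex c x)" by (auto simp: Complex_eq intro!: continuous_intros)
    show "(\<lambda>x. Complex c x) ` {a..b} \<subseteq> closed_segment (Complex c a) (Complex c b)"
      using assms(1) by (auto simp: closed_segment_same_Re closed_segment_eq_real_ivl)
  qed
  have "cmod (contour_integral (linepath (Complex c a) (Complex c b)) g) \<le> integral {a..b} G"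
  proof -
    have eq: "contour_integral (linepath (Complex c a) (Complex c b)) g = \<i> * integral {a..b} (\<lambda>x. g (Complex c x))"
      by (rule contour_integral_linepath_same_Re) (use assms in auto)
    show ?thesis unfolding eq
      using integral_norm_bound_integral[OF integrable_continuous_interval[OF cc] Gi bd]
      by (simp add: norm_mult)
  qed
  then show "cmod (contour_integral (linepath (Complex c a) (Complex c b)) g) \<le> integral {a..b} G"
    "cmod (contour_integral (linepath (Complex c b) (Complex c a)) g) \<le> integral {a..b} G"
    using contour_integral_reverse_linepath[of "Complex c b" "Complex c a" g] cont
    by (auto simp: closed_segment_commute)
qed


lemma int_shrink_bound:
  fixes \<phi> :: "real \<Rightarrow> real"
  assumes "c \<le> a" "b \<le> d" "a \<le> b" "continuous_on {c..d} \<phi>" "\<And>u. u \<in> {c..d} \<Longrightarrow> 0 \<le> \<phi> u"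
    "0 < r" "r \<le> s"
  shows "integral {a..b} (\<lambda>u. \<phi> u / s) \<le> integral {c..d} \<phi> / r"
proof -
  have ab: "{a..b} \<subseteq> {c..d}" using assms by auto
  have ci: "continuous_on {a..b} \<phi>" using continuous_on_subset[OF assms(4) ab] .
  have "integral {a..b} (\<lambda>u. \<phi> u / s) = integral {a..b} \<phi> / s" by simp
  also have "integral {a..b} \<phi> \<le> integral {c..d} \<phi>"
    by (rule integral_subset_le[OF ab integrable_continuous_interval[OF ci] integrable_continuous_interval[OF assms(4)]])
      (use assms(5) in auto)
  moreover have "integral {c..d} \<phi> \<ge> 0"
    by (rule integral_nonneg[OF integrable_continuous_interval[OF assms(4)]]) (use assms(5) in auto)
  ultimately show ?thesis using assms(6,7)
    by (smt (verit, ccfv_SIG) divide_right_mono frac_le integral_nonneg)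
qed

lemma square_step:
  fixes f :: "complex \<Rightarrow> complex" and x y r s :: real
  assumes hol: "f holomorphic_on cbox (Complex (x - 2*r) (y - 2*r)) (Complex (x + 2*r) (y + 2*r))"
    and r: "0 < r" "r \<le> s" "s \<le> 2 * r"
  shows "2 * pi * cmod (f (Complex x y)) \<le>
    (integral {x - 2*r..x + 2*r} (\<lambda>u. cmod (f (Complex u (y - s)))) +
     integral {x - 2*r..x + 2*r} (\<lambda>u. cmod (f (Complex u (y + s)))) +
     integral {y - 2*r..y + 2*r} (\<lambda>v. cmod (f (Complex (x + s) v))) +
     integral {y - 2*r..y + 2*r} (\<lambda>v. cmod (f (Complex (x - s) v)))) / r"
proof -
  define C2 where "C2 = cbox (Complex (x - 2*r) (y - 2*r)) (Complex (x + 2*r) (y + 2*r))"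
  define z where "z = Complex x y"
  define a1 where "a1 = Complex (x - s) (y - s)"
  define a2 where "a2 = Complex (x + s) (y - s)"
  define a3 where "a3 = Complex (x + s) (y + s)"
  define a4 where "a4 = Complex (x - s) (y + s)"
  define g where "g = (\<lambda>w. f w / (w - z))"
  have s: "s > 0" using r by simp
  have zb: "z \<in> box a1 a3" using s by (simp add: in_box_complex_iff z_def a1_def a3_def)
  have zi: "z \<in> interior C2" using r by (simp add: C2_def z_def in_box_complex_iff)
  have sub: "cbox a1 a3 \<subseteq> C2" using r
    by (auto simp: C2_def a1_def a3_def in_cbox_complex_iff)
  have pim: "path_image (rectpath a1 a3) = cbox a1 a3 - box a1 a3"
    by (rule path_image_rectpath_cbox_minus_box) (use s in \<open>auto simp: a1_def a3_def\<close>)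
  have pim2: "path_image (rectpath a1 a3) \<subseteq> C2 - {z}" using pim sub zb by auto
  have cauchy: "(g has_contour_integral (2 * pi * \<i> * 1 * f z)) (rectpath a1 a3)"
    using Cauchy_integral_formula_convex_simple[of C2 f z "rectpath a1 a3"] hol zi pim2
      winding_number_rectpath[OF zb]
    by (auto simp: C2_def g_def)
  have contf: "continuous_on C2 f" using hol holomorphic_on_imp_continuous_on by (auto simp: C2_def)
  have contg: "continuous_on (C2 - {z}) g"
    unfolding g_def by (intro continuous_intros continuous_on_subset[OF contf]) auto
  have rp: "rectpath a1 a3 = linepath a1 a2 +++ linepath a2 a3 +++ linepath a3 a4 +++ linepath a4 a1"
    by (simp add: rectpath_def Let_def a1_def a2_def a3_def a4_def)
  have segs: "closed_segment a1 a2 \<subseteq> C2 - {z}" "closed_segment a2 a3 \<subseteq> C2 - {z}"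
    "closed_segment a3 a4 \<subseteq> C2 - {z}" "closed_segment a4 a1 \<subseteq> C2 - {z}"
    using pim2 unfolding rp by (auto simp: path_image_join)
  have cs: "continuous_on (closed_segment a1 a2) g" "continuous_on (closed_segment a2 a3) g"
    "continuous_on (closed_segment a3 a4) g" "continuous_on (closed_segment a4 a1) g"
    using continuous_on_subset[OF contg] segs by blast+
  have ci: "g contour_integrable_on linepath a1 a2" "g contour_integrable_on linepath a2 a3"
    "g contour_integrable_on linepath a3 a4" "g contour_integrable_on linepath a4 a1"
    using cs contour_integrable_continuous_linepath by blast+
  define c1 where "c1 = contour_integral (linepath a1 a2) g"
  define c2 where "c2 = contour_integral (linepath a2 a3) g"
  define c3 where "c3 = contour_integral (linepath a3 a4) g"
  define c4 where "c4 = contour_integral (linepath a4 a1) g"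
  have "contour_integral (rectpath a1 a3) g = c1 + c2 + c3 + c4"
    using ci unfolding rp c1_def c2_def c3_def c4_def by (simp add: contour_integrable_joinI)
  moreover have "contour_integral (rectpath a1 a3) g = 2 * pi * \<i> * f z"
    using cauchy contour_integral_unique by fastforce
  ultimately have eq: "2 * pi * \<i> * f z = c1 + c2 + c3 + c4" by simp
  have "2 * pi * cmod (f z) = cmod (2 * pi * \<i> * f z)" by (simp add: norm_mult)
  also have "\<dots> \<le> cmod c1 + cmod c2 + cmod c3 + cmod c4"
    unfolding eq by (meson add_mono norm_triangle_ineq order_refl order_trans)
  finally have main: "2 * pi * cmod (f z) \<le> cmod c1 + cmod c2 + cmod c3 + cmod c4" .
  have gb: "cmod (g w) \<le> cmod (f w) / s" if "\<bar>Re w - x\<bar> = s \<or> \<bar>Im w - y\<bar> = s" for w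
  proof -
    have "s \<le> cmod (w - z)"
      using that abs_Re_le_cmod[of "w - z"] abs_Im_le_cmod[of "w - z"] by (auto simp: z_def)
    then show ?thesis unfolding g_def norm_divide
      using s by (intro divide_left_mono) (auto intro!: mult_pos_pos)
  qed
  have ch: "continuous_on {x - 2*r..x + 2*r} (\<lambda>u. cmod (f (Complex u c)))" if "c \<in> {y - 2*r..y + 2*r}" for c
  proof -
    have "continuous_on {x - 2*r..x + 2*r} (\<lambda>u. f (Complex u c))"
    proof (rule continuous_on_compose2[OF contf])
      show "continuous_on {x - 2*r..x + 2*r} (\<lambda>u. Complex u c)" by (auto simp: Complex_eq intro!: continuous_intros)
      show "(\<lambda>u. Complex u c) ` {x - 2*r..x + 2*r} \<subseteq> C2" using that by (auto simp: C2_def in_cbox_complex_iff)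
    qed
    then show ?thesis by (intro continuous_intros)
  qed
  have cv: "continuous_on {y - 2*r..y + 2*r} (\<lambda>v. cmod (f (Complex c v)))" if "c \<in> {x - 2*r..x + 2*r}" for c
  proof -
    have "continuous_on {y - 2*r..y + 2*r} (\<lambda>v. f (Complex c v))"
    proof (rule continuous_on_compose2[OF contf])
      show "continuous_on {y - 2*r..y + 2*r} (\<lambda>v. Complex c v)" by (auto simp: Complex_eq intro!: continuous_intros)
      show "(\<lambda>v. Complex c v) ` {y - 2*r..y + 2*r} \<subseteq> C2" using that by (auto simp: C2_def in_cbox_complex_iff)
    qed
    then show ?thesis by (intro continuous_intros)
  qed
  have b1: "cmod c1 \<le> integral {x - 2*r..x + 2*r} (\<lambda>u. cmod (f (Complex u (y - s)))) / r"
  proof -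
    have "cmod c1 \<le> integral {x - s..x + s} (\<lambda>u. cmod (f (Complex u (y - s))) / s)"
      unfolding c1_def a1_def a2_def
    proof (rule seg_bound_Im(1))
      show "continuous_on (closed_segment (Complex (x - s) (y - s)) (Complex (x + s) (y - s))) g"
        using cs(1) by (simp add: a1_def a2_def)
      show "(\<lambda>u. cmod (f (Complex u (y - s))) / s) integrable_on {x - s..x + s}"
        using ch[of "y - s"] r by (intro integrable_continuous_interval continuous_intros continuous_on_subset[OF ch[of "y - s"]]) auto
    qed (use s gb in auto)
    also have "\<dots> \<le> integral {x - 2*r..x + 2*r} (\<lambda>u. cmod (f (Complex u (y - s)))) / r"
      by (rule int_shrink_bound) (use r ch[of "y - s"] in auto)
    finally show ?thesis .
  qed
  have b3: "cmod c3 \<le> integral {x - 2*r..x + 2*r} (\<lambda>u. cmod (f (Complex u (y + s)))) / r"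
  proof -
    have "cmod c3 \<le> integral {x - s..x + s} (\<lambda>u. cmod (f (Complex u (y + s))) / s)"
      unfolding c3_def a3_def a4_def
    proof (rule seg_bound_Im(2))
      show "continuous_on (closed_segment (Complex (x - s) (y + s)) (Complex (x + s) (y + s))) g"
        using cs(3) by (simp add: a3_def a4_def closed_segment_commute)
      show "(\<lambda>u. cmod (f (Complex u (y + s))) / s) integrable_on {x - s..x + s}"
        using ch[of "y + s"] r by (intro integrable_continuous_interval continuous_intros continuous_on_subset[OF ch[of "y + s"]]) auto
    qed (use s gb in auto)
    also have "\<dots> \<le> integral {x - 2*r..x + 2*r} (\<lambda>u. cmod (f (Complex u (y + s)))) / r"
      by (rule int_shrink_bound) (use r ch[of "y + s"] in auto)
    finally show ?thesis .
  qed
  have b2: "cmod c2 \<le> integral {y - 2*r..y + 2*r} (\<lambda>v. cmod (f (Complex (x + s) v))) / r"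
  proof -
    have "cmod c2 \<le> integral {y - s..y + s} (\<lambda>v. cmod (f (Complex (x + s) v)) / s)"
      unfolding c2_def a2_def a3_def
    proof (rule seg_bound_Re(1))
      show "continuous_on (closed_segment (Complex (x + s) (y - s)) (Complex (x + s) (y + s))) g"
        using cs(2) by (simp add: a2_def a3_def)
      show "(\<lambda>v. cmod (f (Complex (x + s) v)) / s) integrable_on {y - s..y + s}"
        using cv[of "x + s"] r by (intro integrable_continuous_interval continuous_intros continuous_on_subset[OF cv[of "x + s"]]) auto
    qed (use s gb in auto)
    also have "\<dots> \<le> integral {y - 2*r..y + 2*r} (\<lambda>v. cmod (f (Complex (x + s) v))) / r"
      by (rule int_shrink_bound) (use r cv[of "x + s"] in auto)
    finally show ?thesis .
  qed
  have b4: "cmod c4 \<le> integral {y - 2*r..y + 2*r} (\<lambda>v. cmod (f (Complex (x - s) v))) / r"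
  proof -
    have "cmod c4 \<le> integral {y - s..y + s} (\<lambda>v. cmod (f (Complex (x - s) v)) / s)"
      unfolding c4_def a4_def a1_def
    proof (rule seg_bound_Re(2))
      show "continuous_on (closed_segment (Complex (x - s) (y - s)) (Complex (x - s) (y + s))) g"
        using cs(4) by (simp add: a4_def a1_def closed_segment_commute)
      show "(\<lambda>v. cmod (f (Complex (x - s) v)) / s) integrable_on {y - s..y + s}"
        using cv[of "x - s"] r by (intro integrable_continuous_interval continuous_intros continuous_on_subset[OF cv[of "x - s"]]) auto
    qed (use s gb in auto)
    also have "\<dots> \<le> integral {y - 2*r..y + 2*r} (\<lambda>v. cmod (f (Complex (x - s) v))) / r"
      by (rule int_shrink_bound) (use r cv[of "x - s"] in auto)
    finally show ?thesis .
  qed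
  show ?thesis using main b1 b2 b3 b4 by (simp add: z_def add_divide_distrib)
qed


lemma iter_to_area:
  fixes F :: "real \<times> real \<Rightarrow> real"
  assumes "continuous_on (cbox (a, c) (b, d)) F"
  shows "integral {a..b} (\<lambda>u. integral {c..d} (\<lambda>v. F (u, v))) = integral (cbox (a, c) (b, d)) F"
    "integral {c..d} (\<lambda>v. integral {a..b} (\<lambda>u. F (u, v))) = integral (cbox (a, c) (b, d)) F"
proof -
  show 1: "integral {a..b} (\<lambda>u. integral {c..d} (\<lambda>v. F (u, v))) = integral (cbox (a, c) (b, d)) F"
    using integral_prod_continuous[OF assms] by simp
  have "continuous_on (cbox (a, c) (b, d)) (\<lambda>(u, v). F (u, v))" using assms by simp
  from integral_swap_continuous[of a c b d "\<lambda>u v. F (u, v)", OF this]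
  show "integral {c..d} (\<lambda>v. integral {a..b} (\<lambda>u. F (u, v))) = integral (cbox (a, c) (b, d)) F"
    using 1 by simp
qed

lemma area_mono:
  fixes F :: "real \<times> real \<Rightarrow> real"
  assumes "continuous_on Q F" "\<And>p. p \<in> Q \<Longrightarrow> 0 \<le> F p" "cbox a b \<subseteq> Q" "Q = cbox c d"
  shows "integral (cbox a b) F \<le> integral Q F"
  by (rule integral_subset_le[OF assms(3)])
    (use assms continuous_on_subset[OF assms(1,3)] in \<open>auto intro: integrable_continuous\<close>)

lemma reflect_shift:
  fixes \<phi> :: "real \<Rightarrow> real"
  shows "integral {r..2*r} (\<lambda>s. \<phi> (y - s)) = integral {y - 2*r..y - r} \<phi>"
    "integral {r..2*r} (\<lambda>s. \<phi> (y + s)) = integral {y + r..y + 2*r} \<phi>"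
proof -
  have "integral {r..2*r} (\<lambda>s. \<phi> (y - s)) = integral {-2*r..-r} (\<lambda>t. \<phi> (t + y))"
    using Henstock_Kurzweil_Integration.integral_reflect_real[of "-r" "-(2*r)" "\<lambda>t. \<phi> (t + y)"] by (simp add: algebra_simps)
  also have "\<dots> = integral {(y - 2*r) - y..(y - r) - y} (\<lambda>t. \<phi> (t + y))" by simp
  also have "\<dots> = integral {y - 2*r..y - r} \<phi>" by (rule integral_shift_real_ivl)
  finally show "integral {r..2*r} (\<lambda>s. \<phi> (y - s)) = integral {y - 2*r..y - r} \<phi>" .
  have "integral {r..2*r} (\<lambda>s. \<phi> (y + s)) = integral {(y + r) - y..(y + 2*r) - y} (\<lambda>t. \<phi> (t + y))"
    by (simp add: algebra_simps)
  also have "\<dots> = integral {y + r..y + 2*r} \<phi>" by (rule integral_shift_real_ivl)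
  finally show "integral {r..2*r} (\<lambda>s. \<phi> (y + s)) = integral {y + r..y + 2*r} \<phi>" .
qed

lemma pointwise_L1:
  fixes f :: "complex \<Rightarrow> complex" and x y r :: real
  assumes hol: "f holomorphic_on cbox (Complex (x - 2*r) (y - 2*r)) (Complex (x + 2*r) (y + 2*r))"
    and r: "0 < r"
  shows "cmod (f (Complex x y)) \<le>
     2 / (pi * r\<^sup>2) * integral (cbox (x - 2*r, y - 2*r) (x + 2*r, y + 2*r)) (\<lambda>p. cmod (f (emb p)))"
proof -
  define C2 where "C2 = cbox (Complex (x - 2*r) (y - 2*r)) (Complex (x + 2*r) (y + 2*r))"
  define Q where "Q = cbox (x - 2*r, y - 2*r) (x + 2*r, y + 2*r)"
  define G where "G = (\<lambda>p. cmod (f (emb p)))"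
  have contf: "continuous_on C2 f" using hol holomorphic_on_imp_continuous_on by (auto simp: C2_def)
  have embQ: "emb ` Q \<subseteq> C2"
    by (auto simp: Q_def C2_def in_cbox_complex_iff emb_def cbox_Pair_eq)
  have contG: "continuous_on Q G" unfolding G_def
    by (intro continuous_intros continuous_on_compose2[OF contf continuous_on_emb embQ])
  have G0: "\<And>p. 0 \<le> G p" by (simp add: G_def)
  define Hb where "Hb v = integral {x - 2*r..x + 2*r} (\<lambda>u. G (u, v))" for v
  define Vb where "Vb u = integral {y - 2*r..y + 2*r} (\<lambda>v. G (u, v))" for u
  have GC: "G (u, v) = cmod (f (Complex u v))" for u v by (simp add: G_def emb_def)
  have cHb: "continuous_on {y - 2*r..y + 2*r} Hb"
  proof -
    have "continuous_on ({y - 2*r..y + 2*r} \<times> cbox (x - 2*r) (x + 2*r)) (\<lambda>(v, u). G (u, v))"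
    proof -
      have "continuous_on ({y - 2*r..y + 2*r} \<times> cbox (x - 2*r) (x + 2*r)) (G \<circ> prod.swap)"
        by (rule continuous_on_compose[OF continuous_on_swap continuous_on_subset[OF contG]])
          (auto simp: Q_def cbox_Pair_eq)
      then show ?thesis by (simp add: o_def case_prod_unfold prod.swap_def)
    qed
    from integral_continuous_on_param[OF this] show ?thesis by (simp add: Hb_def)
  qed
  have cVb: "continuous_on {x - 2*r..x + 2*r} Vb"
  proof -
    have "continuous_on ({x - 2*r..x + 2*r} \<times> cbox (y - 2*r) (y + 2*r)) (\<lambda>(u, v). G (u, v))"
      using continuous_on_subset[OF contG] by (auto simp: Q_def cbox_Pair_eq)
    from integral_continuous_on_param[OF this] show ?thesis by (simp add: Vb_def)
  qed
  have step: "2 * pi * cmod (f (Complex x y)) \<le> (Hb (y - s) + Hb (y + s) + Vb (x + s) + Vb (x - s)) / r"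
    if "s \<in> {r..2*r}" for s
    using square_step[OF hol r, of s] that by (simp add: Hb_def Vb_def GC)
  have ci1: "(\<lambda>s. Hb (y - s)) integrable_on {r..2*r}"
    by (intro integrable_continuous_interval continuous_on_compose2[OF cHb]) (auto intro!: continuous_intros)
  have ci2: "(\<lambda>s. Hb (y + s)) integrable_on {r..2*r}"
    by (intro integrable_continuous_interval continuous_on_compose2[OF cHb]) (auto intro!: continuous_intros)
  have ci3: "(\<lambda>s. Vb (x + s)) integrable_on {r..2*r}"
    by (intro integrable_continuous_interval continuous_on_compose2[OF cVb]) (auto intro!: continuous_intros)
  have ci4: "(\<lambda>s. Vb (x - s)) integrable_on {r..2*r}"
    by (intro integrable_continuous_interval continuous_on_compose2[OF cVb]) (auto intro!: continuous_intros)
  have "integral {r..2*r} (\<lambda>s. 2 * pi * cmod (f (Complex x y))) \<le>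
        integral {r..2*r} (\<lambda>s. (Hb (y - s) + Hb (y + s) + Vb (x + s) + Vb (x - s)) / r)"
    by (rule integral_le) (use step ci1 ci2 ci3 ci4 in \<open>auto intro!: integrable_add integrable_on_divide\<close>)
  also have "\<dots> = (integral {r..2*r} (\<lambda>s. Hb (y - s)) + integral {r..2*r} (\<lambda>s. Hb (y + s)) +
        integral {r..2*r} (\<lambda>s. Vb (x + s)) + integral {r..2*r} (\<lambda>s. Vb (x - s))) / r"
    using ci1 ci2 ci3 ci4 by (simp add: integral_add integral_divide integrable_add)
  also have "\<dots> = (integral {y - 2*r..y - r} Hb + integral {y + r..y + 2*r} Hb +
        integral {x + r..x + 2*r} Vb + integral {x - 2*r..x - r} Vb) / r"
    using reflect_shift[of r Hb y] reflect_shift[of r Vb x] by simp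
  also have "integral {y - 2*r..y - r} Hb = integral (cbox (x - 2*r, y - 2*r) (x + 2*r, y - r)) G"
    unfolding Hb_def by (rule iter_to_area(2)) (rule continuous_on_subset[OF contG], auto simp: Q_def cbox_Pair_eq)
  also have "integral {y + r..y + 2*r} Hb = integral (cbox (x - 2*r, y + r) (x + 2*r, y + 2*r)) G"
    unfolding Hb_def by (rule iter_to_area(2)) (rule continuous_on_subset[OF contG], auto simp: Q_def cbox_Pair_eq)
  also have "integral {x + r..x + 2*r} Vb = integral (cbox (x + r, y - 2*r) (x + 2*r, y + 2*r)) G"
    unfolding Vb_def by (rule iter_to_area(1)) (rule continuous_on_subset[OF contG], auto simp: Q_def cbox_Pair_eq)
  also have "integral {x - 2*r..x - r} Vb = integral (cbox (x - 2*r, y - 2*r) (x - r, y + 2*r)) G"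
    unfolding Vb_def by (rule iter_to_area(1)) (rule continuous_on_subset[OF contG], auto simp: Q_def cbox_Pair_eq)
  finally have A: "2 * pi * cmod (f (Complex x y)) * r \<le>
     (integral (cbox (x - 2*r, y - 2*r) (x + 2*r, y - r)) G + integral (cbox (x - 2*r, y + r) (x + 2*r, y + 2*r)) G +
      integral (cbox (x + r, y - 2*r) (x + 2*r, y + 2*r)) G + integral (cbox (x - 2*r, y - 2*r) (x - r, y + 2*r)) G) / r"
    using r by (simp add: ac_simps)
  have m: "integral (cbox (x - 2*r, y - 2*r) (x + 2*r, y - r)) G \<le> integral Q G"
    "integral (cbox (x - 2*r, y + r) (x + 2*r, y + 2*r)) G \<le> integral Q G"
    "integral (cbox (x + r, y - 2*r) (x + 2*r, y + 2*r)) G \<le> integral Q G"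
    "integral (cbox (x - 2*r, y - 2*r) (x - r, y + 2*r)) G \<le> integral Q G"
    by (rule area_mono[OF contG G0 _ Q_def]; use r in \<open>auto simp: Q_def cbox_Pair_eq\<close>)+
  have "2 * pi * cmod (f (Complex x y)) * r \<le> 4 * integral Q G / r"
    using A m r by (smt (verit, ccfv_SIG) divide_right_mono)
  then have "cmod (f (Complex x y)) * (pi * r\<^sup>2) \<le> 2 * integral Q G"
    using r by (simp add: field_simps power2_eq_square)
  then show ?thesis using r pi_gt_zero
    by (simp add: Q_def G_def field_simps power2_eq_square)
qed


lemma box_lebesgue:
  fixes G :: "real \<times> real \<Rightarrow> real"
  assumes "continuous_on (cbox a b) G"
  shows "set_integrable lborel (cbox a b) G" "integral (cbox a b) G = (LINT p:cbox a b|lborel. G p)"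
proof -
  show si: "set_integrable lborel (cbox a b) G"
    unfolding set_integrable_def using borel_integrable_compact[OF compact_cbox assms] by simp
  show "integral (cbox a b) G = (LINT p:cbox a b|lborel. G p)"
    using set_borel_integral_eq_integral(2)[OF si] by simp
qed

lemma sets_lborel_Hpl [measurable]: "Hpl \<in> sets lborel"
  using open_Hpl by simp

lemma meas_on_Hpl:
  fixes G :: "real \<times> real \<Rightarrow> real"
  assumes "continuous_on Hpl G"
  shows "(\<lambda>p. indicator Hpl p * G p) \<in> borel_measurable lborel"
  using borel_measurable_continuous_on_indicator[of Hpl G] assms open_Hpl by simp

lemma set_int_mono_subset:
  fixes G :: "real \<times> real \<Rightarrow> real"
  assumes "set_integrable lborel A G" "set_integrable lborel B G" "A \<subseteq> B" "\<And>p. p \<in> B \<Longrightarrow> 0 \<le> G p"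
  shows "(LINT p:A|lborel. G p) \<le> (LINT p:B|lborel. G p)"
  unfolding set_lebesgue_integral_def
  by (rule integral_mono) (use assms in \<open>auto simp: set_integrable_def indicator_def\<close>)

lemma cbox_sub_Hpl:
  assumes "0 < y - 2*r"
  shows "cbox (x - 2*r, y - 2*r) (x + 2*r, y + 2*r) \<subseteq> Hpl"
  using assms by (auto simp: Hpl_def cbox_Pair_eq)

lemma pointwise_L2:
  fixes h :: "complex \<Rightarrow> complex"
  assumes h: "h holomorphic_on HH" and r: "0 < r" "0 < y - 2*r"
  shows "(cmod (h (Complex x y)))\<^sup>2 \<le>
     2 / (pi * r\<^sup>2) * (LINT p:cbox (x - 2*r, y - 2*r) (x + 2*r, y + 2*r)|lborel. (cmod (h (emb p)))\<^sup>2)"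
proof -
  define C2 where "C2 = cbox (Complex (x - 2*r) (y - 2*r)) (Complex (x + 2*r) (y + 2*r))"
  define Q where "Q = cbox (x - 2*r, y - 2*r) (x + 2*r, y + 2*r)"
  have C2H: "C2 \<subseteq> HH" using r by (auto simp: C2_def HH_def in_cbox_complex_iff)
  have hol2: "(\<lambda>z. h z ^ 2) holomorphic_on C2"
    using holomorphic_on_subset[OF h C2H] by (intro holomorphic_intros)
  have "cmod (h (Complex x y) ^ 2) \<le>
     2 / (pi * r\<^sup>2) * integral Q (\<lambda>p. cmod (h (emb p) ^ 2))"
    using pointwise_L1[OF hol2[unfolded C2_def] r(1)] by (simp add: Q_def)
  moreover have cQ: "continuous_on Q (\<lambda>p. (cmod (h (emb p)))\<^sup>2)"
  proof -
    have "emb ` Q \<subseteq> HH" using r by (auto simp: Q_def HH_def cbox_Pair_eq)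
    then show ?thesis
      using continuous_on_compose2[OF holo_derivs(3)[OF h] continuous_on_emb]
      by (auto intro!: continuous_intros)
  qed
  ultimately show ?thesis
    using box_lebesgue(2)[OF cQ[unfolded Q_def]] by (simp add: Q_def norm_power)
qed

lemma pointwise_L2_H:
  fixes h :: "complex \<Rightarrow> complex"
  assumes h: "h holomorphic_on HH" and r: "0 < r" "0 < y - 2*r"
    and L2: "set_integrable lborel Hpl (\<lambda>p. (cmod (h (emb p)))\<^sup>2)"
  shows "(cmod (h (Complex x y)))\<^sup>2 \<le> 2 / (pi * r\<^sup>2) * (LINT p:Hpl|lborel. (cmod (h (emb p)))\<^sup>2)"
proof -
  define Q where "Q = cbox (x - 2*r, y - 2*r) (x + 2*r, y + 2*r)"
  have QH: "Q \<subseteq> Hpl" using cbox_sub_Hpl[OF r(2)] by (simp add: Q_def)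
  have "set_integrable lborel Q (\<lambda>p. (cmod (h (emb p)))\<^sup>2)"
    by (rule set_integrable_subset[OF L2 _ QH]) (simp add: Q_def)
  then have "(LINT p:Q|lborel. (cmod (h (emb p)))\<^sup>2) \<le> (LINT p:Hpl|lborel. (cmod (h (emb p)))\<^sup>2)"
    using set_int_mono_subset[OF _ L2 QH] by simp
  moreover have "0 \<le> 2 / (pi * r\<^sup>2)" using r by simp
  ultimately have "2 / (pi * r\<^sup>2) * (LINT p:Q|lborel. (cmod (h (emb p)))\<^sup>2) \<le>
      2 / (pi * r\<^sup>2) * (LINT p:Hpl|lborel. (cmod (h (emb p)))\<^sup>2)"
    by (rule mult_left_mono)
  then show ?thesis
    using pointwise_L2[OF h r, of x] unfolding Q_def by linarith
qed


definition Q4 :: "real \<times> real \<Rightarrow> (real \<times> real) set" where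
  "Q4 p = cbox (fst p - snd p / 4, snd p - snd p / 4) (fst p + snd p / 4, snd p + snd p / 4)"

lemma Q4_sub: "p \<in> Hpl \<Longrightarrow> Q4 p \<subseteq> Hpl"
  by (auto simp: Q4_def Hpl_def cbox_Pair_eq)

lemma cont_sq_Hpl:
  assumes "h holomorphic_on HH"
  shows "continuous_on Hpl (\<lambda>p. (cmod (h (emb p)))\<^sup>2)"
  using cont_comp_emb[OF holo_derivs(3)[OF assms]] by (auto intro!: continuous_intros)

lemma deriv_pointwise:
  fixes h :: "complex \<Rightarrow> complex"
  assumes h: "h holomorphic_on HH" and p: "p \<in> Hpl"
  shows "(snd p)\<^sup>2 * (cmod (deriv h (emb p)))\<^sup>2 \<le>
     (32768 / pi) / (snd p)\<^sup>2 * (LINT q:Q4 p|lborel. (cmod (h (emb q)))\<^sup>2)"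
proof -
  obtain x y where xy: "p = (x, y)" by (cases p)
  have y: "y > 0" using p xy by (simp add: Hpl_def)
  define \<rho> where "\<rho> = y / 8"
  define r where "r = y / 16"
  define I where "I = (LINT q:Q4 p|lborel. (cmod (h (emb q)))\<^sup>2)"
  define B where "B = sqrt (2 / (pi * r\<^sup>2) * I)"
  have cQ: "continuous_on (Q4 p) (\<lambda>q. (cmod (h (emb q)))\<^sup>2)"
    using continuous_on_subset[OF cont_sq_Hpl[OF h] Q4_sub[OF p]] .
  have siQ: "set_integrable lborel (Q4 p) (\<lambda>q. (cmod (h (emb q)))\<^sup>2)"
    using box_lebesgue(1) cQ unfolding Q4_def by blast
  have I0: "I \<ge> 0" unfolding I_def set_lebesgue_integral_def by (intro Bochner_Integration.integral_nonneg) (auto simp: indicator_def)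
  have ballH: "cball (emb p) \<rho> \<subseteq> HH"
  proof
    fix w assume "w \<in> cball (emb p) \<rho>"
    then have "\<bar>Im (emb p - w)\<bar> \<le> \<rho>" using abs_Im_le_cmod[of "emb p - w"] by (simp add: dist_norm)
    then show "w \<in> HH" using y xy by (auto simp: HH_def \<rho>_def abs_if split: if_splits)
  qed
  have bd: "cmod (h w) \<le> B" if w: "cmod (emb p - w) = \<rho>" for w
  proof -
    have "\<bar>Re (emb p - w)\<bar> \<le> \<rho>" "\<bar>Im (emb p - w)\<bar> \<le> \<rho>"
      using abs_Re_le_cmod[of "emb p - w"] abs_Im_le_cmod[of "emb p - w"] w by linarith+
    then have re: "\<bar>Re w - x\<bar> \<le> \<rho>" and im: "\<bar>Im w - y\<bar> \<le> \<rho>"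
      using xy by (simp_all add: abs_minus_commute)
    have r0: "0 < r" "0 < Im w - 2 * r" using y im by (auto simp: r_def \<rho>_def abs_if split: if_splits)
    define Qw where "Qw = cbox (Re w - 2*r, Im w - 2*r) (Re w + 2*r, Im w + 2*r)"
    have "(cmod (h (Complex (Re w) (Im w))))\<^sup>2 \<le> 2 / (pi * r\<^sup>2) * (LINT q:Qw|lborel. (cmod (h (emb q)))\<^sup>2)"
      using pointwise_L2[OF h r0, of "Re w"] by (simp add: Qw_def)
    moreover have QwQ: "Qw \<subseteq> Q4 p" using re im by (auto simp: Qw_def Q4_def xy cbox_Pair_eq r_def \<rho>_def abs_if split: if_splits)
    have Lw: "(LINT q:Qw|lborel. (cmod (h (emb q)))\<^sup>2) \<le> I"
      unfolding I_def
      by (rule set_int_mono_subset[OF set_integrable_subset[OF siQ _ QwQ] siQ QwQ]) (auto simp: Qw_def)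
    moreover have "2 / (pi * r\<^sup>2) * (LINT q:Qw|lborel. (cmod (h (emb q)))\<^sup>2) \<le> 2 / (pi * r\<^sup>2) * I"
      using Lw r0 by (intro mult_left_mono) auto
    ultimately have "(cmod (h w))\<^sup>2 \<le> 2 / (pi * r\<^sup>2) * I"
      by simp
    then show ?thesis unfolding B_def using real_le_rsqrt by blast
  qed
  have "cmod ((deriv ^^ 1) h (emb p)) \<le> fact 1 * B / \<rho> ^ 1"
  proof (rule Cauchy_inequality)
    show "h holomorphic_on ball (emb p) \<rho>" using holomorphic_on_subset[OF h] ballH ball_subset_cball by blast
    show "continuous_on (cball (emb p) \<rho>) h" using continuous_on_subset[OF holo_derivs(3)[OF h] ballH] .
    show "0 < \<rho>" using y by (simp add: \<rho>_def)
  qed (use bd in auto)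
  then have d: "cmod (deriv h (emb p)) \<le> B / \<rho>" by simp
  have "(cmod (deriv h (emb p)))\<^sup>2 \<le> (B / \<rho>)\<^sup>2"
    using d by (intro power_mono) auto
  also have "\<dots> = 2 / (pi * r\<^sup>2) * I / \<rho>\<^sup>2"
    using I0 by (simp add: B_def power_divide)
  finally have "(cmod (deriv h (emb p)))\<^sup>2 \<le> 2 / (pi * r\<^sup>2) * I / \<rho>\<^sup>2" .
  then have "y\<^sup>2 * (cmod (deriv h (emb p)))\<^sup>2 \<le> y\<^sup>2 * (2 / (pi * r\<^sup>2) * I / \<rho>\<^sup>2)"
    by (intro mult_left_mono) auto
  also have "\<dots> = (32768 / pi) / y\<^sup>2 * I"
    using y by (simp add: r_def \<rho>_def field_simps power2_eq_square)
  finally show ?thesis by (simp add: xy I_def)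
qed


lemma emeasure_box2:
  assumes "a \<le> b" "c \<le> d"
  shows "emeasure lborel (cbox (a, c) (b :: real, d :: real)) = ennreal ((b - a) * (d - c))"
proof -
  have "emeasure lborel (cbox (a, c) (b, d)) = (\<Prod>x\<in>Basis. ((b, d) - (a, c)) \<bullet> x)"
    by (rule emeasure_lborel_cbox) (use assms in \<open>auto simp: Basis_prod_def\<close>)
  also have "\<dots> = (b - a) * (d - c)"
    by (simp add: Basis_prod_def prod.union_disjoint algebra_simps)
  finally show ?thesis by (simp add: mult.commute)
qed

definition Rq :: "real \<times> real \<Rightarrow> (real \<times> real) set" where
  "Rq q = cbox (fst q - snd q, snd q / 2) (fst q + snd q, 2 * snd q)"

definition SQ :: "((real \<times> real) \<times> (real \<times> real)) set" where
  "SQ = {z. fst (fst z) - snd (fst z) / 4 \<le> fst (snd z) \<and> fst (snd z) \<le> fst (fst z) + snd (fst z) / 4 \<and>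
           snd (fst z) - snd (fst z) / 4 \<le> snd (snd z) \<and> snd (snd z) \<le> snd (fst z) + snd (fst z) / 4}"

lemma SQ_closed: "closed SQ"
  unfolding SQ_def
  by (intro closed_Collect_conj closed_Collect_le continuous_intros) auto

lemma indicator_Q4_SQ: "indicator (Q4 p) q = indicator SQ (p, q)"
  by (cases p, cases q) (auto simp: Q4_def SQ_def cbox_Pair_eq indicator_def field_simps)

lemma global_deriv:
  fixes h :: "complex \<Rightarrow> complex"
  assumes h: "h holomorphic_on HH"
    and L2: "set_integrable lborel Hpl (\<lambda>p. (cmod (h (emb p)))\<^sup>2)"
  shows "set_integrable lborel Hpl (\<lambda>p. (snd p)\<^sup>2 * (cmod (deriv h (emb p)))\<^sup>2)"
    "(LINT p:Hpl|lborel. (snd p)\<^sup>2 * (cmod (deriv h (emb p)))\<^sup>2) \<le>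
       (5 * (32768 / pi)) * (LINT p:Hpl|lborel. (cmod (h (emb p)))\<^sup>2)"
proof -
  define K0 :: real where "K0 = 32768 / pi"
  define Kd :: real where "Kd = 5 * K0"
  have K0: "K0 > 0" by (simp add: K0_def)
  define f where "f q = indicator Hpl q * (cmod (h (emb q)))\<^sup>2" for q
  define \<Phi> where "\<Phi> p = indicator Hpl p * ((snd p)\<^sup>2 * (cmod (deriv h (emb p)))\<^sup>2)" for p
  have f0: "\<And>q. 0 \<le> f q" by (simp add: f_def)
  have \<Phi>0: "\<And>p. 0 \<le> \<Phi> p" by (simp add: \<Phi>_def)
  have fm[measurable]: "f \<in> borel_measurable lborel"
    using meas_on_Hpl[OF cont_sq_Hpl[OF h]] by (simp add: f_def[abs_def])
  have cd: "continuous_on Hpl (\<lambda>p. (snd p)\<^sup>2 * (cmod (deriv h (emb p)))\<^sup>2)"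
    using cont_comp_emb[OF holo_derivs(2)[OF h]] by (auto intro!: continuous_intros)
  have \<Phi>m[measurable]: "\<Phi> \<in> borel_measurable lborel"
    using meas_on_Hpl[OF cd] by (simp add: \<Phi>_def[abs_def])
  have fint: "integrable lborel f"
    using L2 by (simp add: set_integrable_def f_def[abs_def])
  have Lf: "(LINT p:Hpl|lborel. (cmod (h (emb p)))\<^sup>2) = integral\<^sup>L lborel f"
    by (simp add: set_lebesgue_integral_def f_def[abs_def])
  have nnf: "(\<integral>\<^sup>+ q. ennreal (f q) \<partial>lborel) = ennreal (integral\<^sup>L lborel f)"
    by (rule nn_integral_eq_integral[OF fint]) (simp add: f0)
  define \<Psi> where "\<Psi> p q = ennreal (indicator Hpl p * (K0 / (snd p)\<^sup>2) * (indicator SQ (p, q) * f q))" for p q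
  have stepB: "ennreal (\<Phi> p) \<le> (\<integral>\<^sup>+ q. \<Psi> p q \<partial>lborel)" for p
  proof (cases "p \<in> Hpl")
    case False
    then show ?thesis by (simp add: \<Phi>_def)
  next
    case True
    have y: "snd p > 0" using True by (simp add: Hpl_def)
    have siQ: "set_integrable lborel (Q4 p) (\<lambda>q. (cmod (h (emb q)))\<^sup>2)"
      using box_lebesgue(1) continuous_on_subset[OF cont_sq_Hpl[OF h] Q4_sub[OF True]] unfolding Q4_def by blast
    have eqf: "(\<lambda>q. indicator (Q4 p) q *\<^sub>R (cmod (h (emb q)))\<^sup>2) = (\<lambda>q. indicator SQ (p, q) * f q)"
      unfolding indicator_Q4_SQ[symmetric]
      using Q4_sub[OF True] by (auto simp: fun_eq_iff f_def indicator_def)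
    have eqf': "(\<lambda>q. indicator (Q4 p) q * (cmod (h (emb q)))\<^sup>2) = (\<lambda>q. indicator SQ (p, q) * f q)"
      using eqf by simp
    have int2: "integrable lborel (\<lambda>q. K0 / (snd p)\<^sup>2 * (indicator SQ (p, q) * f q))"
      using siQ unfolding set_integrable_def eqf by simp
    have "\<Phi> p \<le> K0 / (snd p)\<^sup>2 * (LINT q:Q4 p|lborel. (cmod (h (emb q)))\<^sup>2)"
      using deriv_pointwise[OF h True] True by (simp add: \<Phi>_def K0_def)
    also have "\<dots> = integral\<^sup>L lborel (\<lambda>q. K0 / (snd p)\<^sup>2 * (indicator SQ (p, q) * f q))"
      by (simp add: set_lebesgue_integral_def eqf')
    finally have "ennreal (\<Phi> p) \<le> ennreal (integral\<^sup>L lborel (\<lambda>q. K0 / (snd p)\<^sup>2 * (indicator SQ (p, q) * f q)))"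
      by (rule ennreal_leI)
    also have "\<dots> = (\<integral>\<^sup>+ q. ennreal (K0 / (snd p)\<^sup>2 * (indicator SQ (p, q) * f q)) \<partial>lborel)"
      by (rule nn_integral_eq_integral[OF int2, symmetric]) (use K0 y f0 in auto)
    also have "\<dots> = (\<integral>\<^sup>+ q. \<Psi> p q \<partial>lborel)"
      using True by (simp add: \<Psi>_def)
    finally show ?thesis .
  qed
  have \<Psi>m: "case_prod \<Psi> \<in> borel_measurable (lborel \<Otimes>\<^sub>M lborel)"
  proof -
    have SQb: "SQ \<in> sets borel" using SQ_closed by simp
    have "(\<lambda>z::(real \<times> real) \<times> (real \<times> real). ennreal (indicator Hpl (fst z) * (K0 / (snd (fst z))\<^sup>2) *
        (indicator SQ z * f (snd z)))) \<in> borel_measurable borel"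
    proof -
      have mfst: "(fst :: (real \<times> real) \<times> (real \<times> real) \<Rightarrow> real \<times> real) \<in> borel_measurable borel"
        by (intro borel_measurable_continuous_onI continuous_intros)
      have msnd: "(snd :: (real \<times> real) \<times> (real \<times> real) \<Rightarrow> real \<times> real) \<in> borel_measurable borel"
        by (intro borel_measurable_continuous_onI continuous_intros)
      have mys: "(\<lambda>z::(real \<times> real) \<times> (real \<times> real). (snd (fst z))\<^sup>2) \<in> borel_measurable borel"
        by (intro borel_measurable_continuous_onI continuous_intros)
      have m1: "(\<lambda>z::(real \<times> real) \<times> (real \<times> real). indicator Hpl (fst z) :: real) \<in> borel_measurable borel"
        using measurable_compose[OF mfst borel_measurable_indicator[of Hpl borel]] open_Hpl by (simp add: o_def)
      have m2: "(\<lambda>z::(real \<times> real) \<times> (real \<times> real). K0 / (snd (fst z))\<^sup>2) \<in> borel_measurable borel"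
        by (rule borel_measurable_divide[OF borel_measurable_const mys])
      have m3: "(indicator SQ :: _ \<Rightarrow> real) \<in> borel_measurable borel"
        by (rule borel_measurable_indicator) (use SQb in simp)
      have m4: "(\<lambda>z::(real \<times> real) \<times> (real \<times> real). f (snd z)) \<in> borel_measurable borel"
        using measurable_compose[OF msnd, of f borel] fm by simp
      have "(\<lambda>z::(real \<times> real) \<times> (real \<times> real). indicator Hpl (fst z) * (K0 / (snd (fst z))\<^sup>2) *
        (indicator SQ z * f (snd z))) \<in> borel_measurable borel"
        by (intro borel_measurable_times m1 m2 m3 m4)
      then show ?thesis using measurable_compose[OF _ measurable_ennreal] by blast
    qed
    then show ?thesis unfolding lborel_prod by (simp add: \<Psi>_def case_prod_beta')
  qed
  have psf: "pair_sigma_finite lborel lborel"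
    by (simp add: pair_sigma_finite_def sigma_finite_lborel)
  have stepE: "(\<integral>\<^sup>+ p. \<Psi> p q \<partial>lborel) \<le> ennreal (Kd * f q)" for q
  proof (cases "q \<in> Hpl")
    case False
    then have "\<And>p. \<Psi> p q = 0" by (simp add: \<Psi>_def f_def)
    then show ?thesis by simp
  next
    case True
    have y: "snd q > 0" using True by (simp add: Hpl_def)
    define c where "c = 25 * K0 / (16 * (snd q)\<^sup>2) * f q"
    have c0: "c \<ge> 0" using K0 f0 by (simp add: c_def)
    have "\<Psi> p q \<le> ennreal c * indicator (Rq q) p" for p
    proof (cases "p \<in> Hpl \<and> (p, q) \<in> SQ")
      case False
      then show ?thesis by (auto simp: \<Psi>_def indicator_def)
    next
      case T: True
      have yp: "snd p > 0" using T by (simp add: Hpl_def)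
      have b0: "fst p - snd p / 4 \<le> fst q" "fst q \<le> fst p + snd p / 4"
        "snd p - snd p / 4 \<le> snd q" "snd q \<le> snd p + snd p / 4"
        using T unfolding SQ_def by simp_all
      then have bnds: "\<bar>fst q - fst p\<bar> \<le> snd p / 4" "snd p - snd p / 4 \<le> snd q" "snd q \<le> snd p + snd p / 4"
        by linarith+
      have pR: "p \<in> Rq q"
      proof -
        have "fst q - snd q \<le> fst p" "fst p \<le> fst q + snd q" "snd q / 2 \<le> snd p" "snd p \<le> 2 * snd q"
          using b0 yp y by linarith+
        then show ?thesis by (cases p) (simp add: Rq_def cbox_Pair_eq)
      qed
      have "(4 * snd q / 5)\<^sup>2 \<le> (snd p)\<^sup>2" using bnds y by (intro power_mono) auto
      then have "16 * (snd q)\<^sup>2 \<le> 25 * (snd p)\<^sup>2" by (simp add: power_divide field_simps)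
      then have "K0 / (snd p)\<^sup>2 \<le> 25 * K0 / (16 * (snd q)\<^sup>2)"
        using K0 yp y by (simp add: field_simps)
      then have "K0 / (snd p)\<^sup>2 * f q \<le> c" unfolding c_def using f0 by (intro mult_right_mono) auto
      then show ?thesis using T pR by (simp add: \<Psi>_def ennreal_leI)
    qed
    then have "(\<integral>\<^sup>+ p. \<Psi> p q \<partial>lborel) \<le> (\<integral>\<^sup>+ p. ennreal c * indicator (Rq q) p \<partial>lborel)"
      by (intro nn_integral_mono) auto
    also have "\<dots> = ennreal c * emeasure lborel (Rq q)"
      by (rule nn_integral_cmult_indicator) (simp add: Rq_def)
    also have "emeasure lborel (Rq q) = ennreal (2 * snd q * (2 * snd q - snd q / 2))"
      unfolding Rq_def using y by (subst emeasure_box2) auto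
    also have "ennreal c * \<dots> = ennreal (c * (3 * (snd q)\<^sup>2))"
      using c0 y by (simp add: ennreal_mult[symmetric] algebra_simps power2_eq_square)
    also have "c * (3 * (snd q)\<^sup>2) \<le> Kd * f q"
      using y f0 K0 by (simp add: c_def Kd_def field_simps power2_eq_square)
    finally show ?thesis by (simp add: ennreal_leI)
  qed
  have "(\<integral>\<^sup>+ p. ennreal (\<Phi> p) \<partial>lborel) \<le> (\<integral>\<^sup>+ p. (\<integral>\<^sup>+ q. \<Psi> p q \<partial>lborel) \<partial>lborel)"
    by (intro nn_integral_mono stepB)
  also have "\<dots> = (\<integral>\<^sup>+ q. (\<integral>\<^sup>+ p. \<Psi> p q \<partial>lborel) \<partial>lborel)"
    using pair_sigma_finite.Fubini'[OF psf \<Psi>m] by simp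
  also have "\<dots> \<le> (\<integral>\<^sup>+ q. ennreal (Kd * f q) \<partial>lborel)"
    by (intro nn_integral_mono stepE)
  also have "\<dots> = ennreal Kd * (\<integral>\<^sup>+ q. ennreal (f q) \<partial>lborel)"
    using K0 f0 by (simp add: ennreal_mult nn_integral_cmult Kd_def)
  also have "\<dots> = ennreal (Kd * integral\<^sup>L lborel f)"
  proof -
    have If0: "0 \<le> integral\<^sup>L lborel f" by (intro Bochner_Integration.integral_nonneg f0)
    have "Kd \<ge> 0" using K0 by (simp add: Kd_def)
    then show ?thesis using If0 by (simp add: nnf ennreal_mult)
  qed
  finally have bound: "(\<integral>\<^sup>+ p. ennreal (\<Phi> p) \<partial>lborel) \<le> ennreal (Kd * integral\<^sup>L lborel f)" .
  have \<Phi>int: "integrable lborel \<Phi>"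
    by (rule integrableI_nonneg[OF \<Phi>m]) (use \<Phi>0 bound in \<open>auto simp: top.not_eq_extremum intro: le_less_trans\<close>)
  show "set_integrable lborel Hpl (\<lambda>p. (snd p)\<^sup>2 * (cmod (deriv h (emb p)))\<^sup>2)"
    using \<Phi>int by (simp add: set_integrable_def \<Phi>_def[abs_def])
  have "integral\<^sup>L lborel \<Phi> = enn2real (\<integral>\<^sup>+ p. ennreal (\<Phi> p) \<partial>lborel)"
    by (rule integral_eq_nn_integral[OF \<Phi>m]) (simp add: \<Phi>0)
  also have "\<dots> \<le> Kd * integral\<^sup>L lborel f"
  proof -
    have "0 \<le> integral\<^sup>L lborel f" by (intro Bochner_Integration.integral_nonneg f0)
    then have "0 \<le> Kd * integral\<^sup>L lborel f" using K0 by (simp add: Kd_def)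
    moreover have "enn2real (\<integral>\<^sup>+ p. ennreal (\<Phi> p) \<partial>lborel) \<le> enn2real (ennreal (Kd * integral\<^sup>L lborel f))"
      by (rule enn2real_mono[OF bound]) simp
    ultimately show ?thesis by simp
  qed
  finally show "(LINT p:Hpl|lborel. (snd p)\<^sup>2 * (cmod (deriv h (emb p)))\<^sup>2) \<le>
       (5 * (32768 / pi)) * (LINT p:Hpl|lborel. (cmod (h (emb p)))\<^sup>2)"
    by (simp add: set_lebesgue_integral_def \<Phi>_def[abs_def] f_def[abs_def] Kd_def K0_def)
qed


lemma sqrt_bound_lambda:
  fixes X A B :: real
  assumes A: "0 \<le> A" and B: "0 \<le> B"
    and H: "\<And>l. 0 < l \<Longrightarrow> X \<le> (1 + l) * A + (1 + 1 / l) * B"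
  shows "X \<le> (sqrt A + sqrt B)\<^sup>2"
proof (cases "A > 0 \<and> B > 0")
  case True
  define l where "l = sqrt B / sqrt A"
  have l: "l > 0" using True by (simp add: l_def)
  have "X \<le> (1 + l) * A + (1 + 1 / l) * B" using H[OF l] .
  also have "\<dots> = (sqrt A + sqrt B)\<^sup>2"
  proof -
    have sA: "sqrt A * sqrt A = A" and sB: "sqrt B * sqrt B = B" using A B by simp_all
    have "(1 + l) * A = A + sqrt A * sqrt B" using True sA by (simp add: l_def field_simps)
    moreover have "(1 + 1 / l) * B = B + sqrt A * sqrt B" using True sB by (simp add: l_def field_simps)
    ultimately show ?thesis using sA sB by (simp add: power2_eq_square algebra_simps)
  qed
  finally show ?thesis .
next
  case False
  then have "A = 0 \<or> B = 0" using A B by auto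
  then show ?thesis
  proof
    assume A0: "A = 0"
    have "X \<le> B"
    proof (rule field_le_epsilon)
      fix e :: real assume e: "0 < e"
      define l where "l = (B + 1) / e"
      have l: "l > 0" using e B by (simp add: l_def)
      have "X \<le> B + B / l" using H[OF l] A0 by (simp add: algebra_simps)
      moreover have "B / l \<le> e" using e B by (simp add: l_def field_simps)
      ultimately show "X \<le> B + e" by simp
    qed
    then show ?thesis using A0 B by simp
  next
    assume B0: "B = 0"
    have "X \<le> A"
    proof (rule field_le_epsilon)
      fix e :: real assume e: "0 < e"
      define l where "l = e / (A + 1)"
      have l: "l > 0" using e A by (simp add: l_def)
      have "X \<le> A + l * A" using H[OF l] B0 by (simp add: algebra_simps)
      moreover have "l * A \<le> e" using e A by (simp add: l_def field_simps)
      ultimately show "X \<le> A + e" by simp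
    qed
    then show ?thesis using B0 A by simp
  qed
qed

lemma norm_sum_sq_le:
  fixes F G :: "'b::real_normed_vector"
  assumes l: "0 < l"
  shows "(norm (F + G))\<^sup>2 \<le> (1 + l) * (norm F)\<^sup>2 + (1 + 1 / l) * (norm G)\<^sup>2"
proof -
  have "(norm (F + G))\<^sup>2 \<le> (norm F + norm G)\<^sup>2"
    by (intro power_mono norm_triangle_ineq) auto
  also have "\<dots> = (norm F)\<^sup>2 + 2 * norm F * norm G + (norm G)\<^sup>2" by (simp add: power2_eq_square algebra_simps)
  also have "2 * norm F * norm G \<le> l * (norm F)\<^sup>2 + (norm G)\<^sup>2 / l"
  proof -
    have "0 \<le> (l * norm F - norm G)\<^sup>2 / l" using l by simp
    also have "(l * norm F - norm G)\<^sup>2 / l = l * (norm F)\<^sup>2 - 2 * norm F * norm G + (norm G)\<^sup>2 / l"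
      using l by (simp add: power2_eq_square field_simps)
    finally show ?thesis by simp
  qed
  finally show ?thesis by (simp add: algebra_simps)
qed

lemma minkowski_set:
  fixes F G :: "real \<times> real \<Rightarrow> 'b::real_normed_vector"
  assumes iF: "set_integrable lborel A (\<lambda>p. (norm (F p))\<^sup>2)"
    and iG: "set_integrable lborel A (\<lambda>p. (norm (G p))\<^sup>2)"
    and mFG: "set_borel_measurable lborel A (\<lambda>p. (norm (F p + G p))\<^sup>2)"
  shows "set_integrable lborel A (\<lambda>p. (norm (F p + G p))\<^sup>2)"
    "sqrt (LINT p:A|lborel. (norm (F p + G p))\<^sup>2) \<le>
       sqrt (LINT p:A|lborel. (norm (F p))\<^sup>2) + sqrt (LINT p:A|lborel. (norm (G p))\<^sup>2)"
proof -
  have i2: "set_integrable lborel A (\<lambda>p. 2 * (norm (F p))\<^sup>2 + 2 * (norm (G p))\<^sup>2)"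
    using iF iG by (intro set_integral_add set_integrable_mult_right) auto
  show iFG: "set_integrable lborel A (\<lambda>p. (norm (F p + G p))\<^sup>2)"
  proof (rule set_integrable_bound[OF i2 mFG])
    show "AE x in lborel. x \<in> A \<longrightarrow> norm ((norm (F x + G x))\<^sup>2) \<le> norm (2 * (norm (F x))\<^sup>2 + 2 * (norm (G x))\<^sup>2)"
      using norm_sum_sq_le[of 1] by (auto simp: abs_of_nonneg)
  qed
  define X where "X = (LINT p:A|lborel. (norm (F p + G p))\<^sup>2)"
  define a where "a = (LINT p:A|lborel. (norm (F p))\<^sup>2)"
  define b where "b = (LINT p:A|lborel. (norm (G p))\<^sup>2)"
  have a0: "0 \<le> a" unfolding a_def set_lebesgue_integral_def
    by (intro Bochner_Integration.integral_nonneg) (auto simp: indicator_def)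
  have b0: "0 \<le> b" unfolding b_def set_lebesgue_integral_def
    by (intro Bochner_Integration.integral_nonneg) (auto simp: indicator_def)
  have X0: "0 \<le> X" unfolding X_def set_lebesgue_integral_def
    by (intro Bochner_Integration.integral_nonneg) (auto simp: indicator_def)
  have "X \<le> (1 + l) * a + (1 + 1 / l) * b" if l: "0 < l" for l
  proof -
    have "X \<le> (LINT p:A|lborel. (1 + l) * (norm (F p))\<^sup>2 + (1 + 1 / l) * (norm (G p))\<^sup>2)"
      unfolding X_def
      by (rule set_integral_mono[OF iFG]) (use iF iG norm_sum_sq_le[OF l] in \<open>auto intro!: set_integral_add set_integrable_mult_right\<close>)
    also have "\<dots> = (1 + l) * a + (1 + 1 / l) * b"
      using iF iG by (simp add: a_def b_def set_integral_add)
    finally show ?thesis .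
  qed
  then have "X \<le> (sqrt a + sqrt b)\<^sup>2" by (rule sqrt_bound_lambda[OF a0 b0])
  then have "sqrt X \<le> sqrt ((sqrt a + sqrt b)\<^sup>2)" by (rule real_sqrt_le_mono)
  then show "sqrt X \<le> sqrt a + sqrt b" using a0 b0 by simp
qed


definition L2h :: "(complex \<Rightarrow> complex) \<Rightarrow> bool" where
  "L2h h \<longleftrightarrow> set_integrable lborel Hpl (\<lambda>p. (cmod (h (emb p)))\<^sup>2)"

definition W :: "real \<Rightarrow> (complex \<Rightarrow> complex) \<Rightarrow> real \<times> real \<Rightarrow> complex \<times> complex" where
  "W a h p = (h (emb p), complex_of_real (2 * a) * (complex_of_real (snd p) * deriv h (emb p) - \<i> * h (emb p)))"

lemma set_int_cong_Hpl:
  fixes f g :: "real \<times> real \<Rightarrow> real"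
  assumes "\<And>p. p \<in> Hpl \<Longrightarrow> f p = g p"
  shows "set_integrable lborel Hpl f \<longleftrightarrow> set_integrable lborel Hpl g"
    "(LINT p:Hpl|lborel. f p) = (LINT p:Hpl|lborel. g p)"
proof -
  have "(\<lambda>p. indicator Hpl p *\<^sub>R f p) = (\<lambda>p. indicator Hpl p *\<^sub>R g p)"
    using assms by (auto simp: fun_eq_iff indicator_def)
  then show "set_integrable lborel Hpl f \<longleftrightarrow> set_integrable lborel Hpl g"
    "(LINT p:Hpl|lborel. f p) = (LINT p:Hpl|lborel. g p)"
    by (simp_all add: set_integrable_def set_lebesgue_integral_def)
qed

lemma rep_unique: "rep h u \<Longrightarrow> rep h v \<Longrightarrow> u = v"
  by (auto simp: rep_def fun_eq_iff)

lemma FF_char: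
  assumes a: "a > 0"
  shows "u \<in> FF a \<longleftrightarrow> (\<exists>h. h holomorphic_on HH \<and> rep h u \<and> L2h h)"
proof
  assume "u \<in> FF a"
  then obtain F where F: "u = dform F" "harmonic_hyp a F" "in_L2 a (dform F)" by (auto simp: FF_def)
  obtain h where h: "h holomorphic_on HH" "rep h (dform F)" using harm_to_hol[OF a F(2)] by blast
  have "L2h h" using F(3) unfolding in_L2_def L2h_def
    using set_int_cong_Hpl(1)[of "\<lambda>p. form_sq a (dform F) p * vol_hyp a p" "\<lambda>p. (cmod (h (emb p)))\<^sup>2"]
      rep_form[OF h(2)] a by simp
  then show "\<exists>h. h holomorphic_on HH \<and> rep h u \<and> L2h h" using h F by blast
next
  assume "\<exists>h. h holomorphic_on HH \<and> rep h u \<and> L2h h"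
  then obtain h where h: "h holomorphic_on HH" "rep h u" "L2h h" by blast
  obtain F where F: "harmonic_hyp a F" "rep h (dform F)" using hol_to_harm[OF h(1)] by blast
  have u: "u = dform F" using rep_unique[OF h(2) F(2)] .
  have "in_L2 a u" using h(3) unfolding in_L2_def L2h_def
    using set_int_cong_Hpl(1)[of "\<lambda>p. form_sq a u p * vol_hyp a p" "\<lambda>p. (cmod (h (emb p)))\<^sup>2"]
      rep_form[OF h(2)] a by simp
  then show "u \<in> FF a" using F u by (auto simp: FF_def)
qed

lemma cont_W:
  assumes h: "h holomorphic_on HH"
  shows "continuous_on Hpl (\<lambda>p. W a h p)"
  unfolding W_def
  using cont_comp_emb[OF holo_derivs(2)[OF h]] cont_comp_emb[OF holo_derivs(3)[OF h]]
  by (auto intro!: continuous_intros)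

lemma norm_W_sq:
  "(norm (W a h p))\<^sup>2 = (cmod (h (emb p)))\<^sup>2 +
     2 * (2 * a\<^sup>2 * (cmod (complex_of_real (snd p) * deriv h (emb p) - \<i> * h (emb p)))\<^sup>2)"
  by (simp add: W_def norm_Pair norm_mult power_mult_distrib)

lemma Def_int:
  assumes h: "h holomorphic_on HH" and L: "L2h h"
  shows "set_integrable lborel Hpl (\<lambda>p. 2 * a\<^sup>2 * (cmod (complex_of_real (snd p) * deriv h (emb p) - \<i> * h (emb p)))\<^sup>2)"
proof -
  note G = global_deriv[OF h L[unfolded L2h_def]]
  have i2: "set_integrable lborel Hpl (\<lambda>p. 4 * a\<^sup>2 * ((snd p)\<^sup>2 * (cmod (deriv h (emb p)))\<^sup>2) + 4 * a\<^sup>2 * (cmod (h (emb p)))\<^sup>2)"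
    using G(1) L by (intro set_integral_add set_integrable_mult_right) (auto simp: L2h_def)
  have cc: "continuous_on Hpl (\<lambda>p. 2 * a\<^sup>2 * (cmod (complex_of_real (snd p) * deriv h (emb p) - \<i> * h (emb p)))\<^sup>2)"
    using cont_comp_emb[OF holo_derivs(2)[OF h]] cont_comp_emb[OF holo_derivs(3)[OF h]]
    by (auto intro!: continuous_intros)
  show ?thesis
  proof (rule set_integrable_bound[OF i2])
    show "set_borel_measurable lborel Hpl (\<lambda>p. 2 * a\<^sup>2 * (cmod (complex_of_real (snd p) * deriv h (emb p) - \<i> * h (emb p)))\<^sup>2)"
      using meas_on_Hpl[OF cc] by (simp add: set_borel_measurable_def)
    show "AE x in lborel. x \<in> Hpl \<longrightarrow> norm (2 * a\<^sup>2 * (cmod (complex_of_real (snd x) * deriv h (emb x) - \<i> * h (emb x)))\<^sup>2)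
        \<le> norm (4 * a\<^sup>2 * ((snd x)\<^sup>2 * (cmod (deriv h (emb x)))\<^sup>2) + 4 * a\<^sup>2 * (cmod (h (emb x)))\<^sup>2)"
    proof (rule AE_I2, rule impI)
      fix x :: "real \<times> real" assume x: "x \<in> Hpl"
      define A where "A = cmod (complex_of_real (snd x) * deriv h (emb x))"
      define B where "B = cmod (h (emb x))"
      have "cmod (complex_of_real (snd x) * deriv h (emb x) - \<i> * h (emb x)) \<le> A + B"
        unfolding A_def B_def using norm_triangle_ineq4[of "complex_of_real (snd x) * deriv h (emb x)" "\<i> * h (emb x)"]
        by (simp add: norm_mult)
      then have "(cmod (complex_of_real (snd x) * deriv h (emb x) - \<i> * h (emb x)))\<^sup>2 \<le> (A + B)\<^sup>2"
        by (intro power_mono) auto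
      also have "\<dots> \<le> 2 * A\<^sup>2 + 2 * B\<^sup>2"
      proof -
        have "0 \<le> (A - B)\<^sup>2" by simp
        moreover have "(A - B)\<^sup>2 = A\<^sup>2 - 2 * A * B + B\<^sup>2" "(A + B)\<^sup>2 = A\<^sup>2 + 2 * A * B + B\<^sup>2"
          by (simp_all add: power2_eq_square algebra_simps)
        ultimately show ?thesis by linarith
      qed
      finally have c1: "(cmod (complex_of_real (snd x) * deriv h (emb x) - \<i> * h (emb x)))\<^sup>2 \<le> 2 * A\<^sup>2 + 2 * B\<^sup>2" .
      have c2: "A\<^sup>2 = (snd x)\<^sup>2 * (cmod (deriv h (emb x)))\<^sup>2" by (simp add: A_def norm_mult power_mult_distrib)
      have "2 * a\<^sup>2 * (cmod (complex_of_real (snd x) * deriv h (emb x) - \<i> * h (emb x)))\<^sup>2 \<le>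
          4 * a\<^sup>2 * ((snd x)\<^sup>2 * (cmod (deriv h (emb x)))\<^sup>2) + 4 * a\<^sup>2 * (cmod (h (emb x)))\<^sup>2"
      proof -
        have "2 * a\<^sup>2 * (cmod (complex_of_real (snd x) * deriv h (emb x) - \<i> * h (emb x)))\<^sup>2 \<le> 2 * a\<^sup>2 * (2 * A\<^sup>2 + 2 * B\<^sup>2)"
          using c1 by (intro mult_left_mono) auto
        then show ?thesis using c2 unfolding B_def by (simp add: algebra_simps)
      qed
      then show "norm (2 * a\<^sup>2 * (cmod (complex_of_real (snd x) * deriv h (emb x) - \<i> * h (emb x)))\<^sup>2)
        \<le> norm (4 * a\<^sup>2 * ((snd x)\<^sup>2 * (cmod (deriv h (emb x)))\<^sup>2) + 4 * a\<^sup>2 * (cmod (h (emb x)))\<^sup>2)"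
        by simp
    qed
  qed
qed


lemma H1_formula:
  assumes a: "a > 0" and h: "h holomorphic_on HH" and r: "rep h u" and L: "L2h h"
  shows "in_L2 a u" "Def_in_L2 a u" "set_integrable lborel Hpl (\<lambda>p. (norm (W a h p))\<^sup>2)"
    "H1norm a u = sqrt (LINT p:Hpl|lborel. (norm (W a h p))\<^sup>2)"
    "L2sq a u = (LINT p:Hpl|lborel. (cmod (h (emb p)))\<^sup>2)"
proof -
  define I0 where "I0 p = (cmod (h (emb p)))\<^sup>2" for p
  define I1 where "I1 p = 2 * a\<^sup>2 * (cmod (complex_of_real (snd p) * deriv h (emb p) - \<i> * h (emb p)))\<^sup>2" for p
  have e0: "\<And>p. p \<in> Hpl \<Longrightarrow> form_sq a u p * vol_hyp a p = I0 p"
    using rep_form[OF r] a by (simp add: I0_def)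
  have e1: "\<And>p. p \<in> Hpl \<Longrightarrow> Def_sq a u p * vol_hyp a p = I1 p"
    using rep_Def[OF h r] by (simp add: I1_def)
  have i0: "set_integrable lborel Hpl I0" using L by (simp add: L2h_def I0_def[abs_def])
  have i1: "set_integrable lborel Hpl I1" using Def_int[OF h L, of a] by (simp add: I1_def[abs_def])
  show "in_L2 a u" unfolding in_L2_def using set_int_cong_Hpl(1)[OF e0] i0 by simp
  show "Def_in_L2 a u" unfolding Def_in_L2_def using set_int_cong_Hpl(1)[OF e1] i1 by simp
  have nW: "(\<lambda>p. (norm (W a h p))\<^sup>2) = (\<lambda>p. I0 p + 2 * I1 p)"
    by (simp add: fun_eq_iff norm_W_sq I0_def I1_def)
  show "set_integrable lborel Hpl (\<lambda>p. (norm (W a h p))\<^sup>2)"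
    unfolding nW using i0 i1 by (intro set_integral_add set_integrable_mult_right) auto
  have L2: "L2sq a u = (LINT p:Hpl|lborel. I0 p)" unfolding L2sq_def using set_int_cong_Hpl(2)[OF e0] by simp
  then show "L2sq a u = (LINT p:Hpl|lborel. (cmod (h (emb p)))\<^sup>2)" by (simp add: I0_def)
  have D2: "DefL2sq a u = (LINT p:Hpl|lborel. I1 p)" unfolding DefL2sq_def using set_int_cong_Hpl(2)[OF e1] by simp
  have "(LINT p:Hpl|lborel. I0 p + 2 * I1 p) = (LINT p:Hpl|lborel. I0 p) + 2 * (LINT p:Hpl|lborel. I1 p)"
    using i0 i1 by (simp add: set_integral_add(2) set_integrable_mult_right)
  then show "H1norm a u = sqrt (LINT p:Hpl|lborel. (norm (W a h p))\<^sup>2)"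
    unfolding H1norm_def nW L2 D2 by simp
qed

lemma rep_zero: "rep (\<lambda>z. 0) (\<lambda>_. (0, 0))"
  by (simp add: rep_def)

lemma rep_add: "rep h u \<Longrightarrow> rep k v \<Longrightarrow> rep (\<lambda>z. h z + k z) (\<lambda>p. u p + v p)"
  by (simp add: rep_def zero_prod_def)

lemma rep_diff: "rep h u \<Longrightarrow> rep k v \<Longrightarrow> rep (\<lambda>z. h z - k z) (\<lambda>p. u p - v p)"
  by (simp add: rep_def zero_prod_def)

lemma rep_scale: "rep h u \<Longrightarrow> rep (\<lambda>z. complex_of_real c * h z) (\<lambda>p. c *\<^sub>R u p)"
  by (simp add: rep_def zero_prod_def)

lemma hol_fd: "h holomorphic_on HH \<Longrightarrow> p \<in> Hpl \<Longrightarrow> h field_differentiable at (emb p)"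
  using holomorphic_on_imp_differentiable_at open_HH by auto

lemma W_add: "h holomorphic_on HH \<Longrightarrow> k holomorphic_on HH \<Longrightarrow> p \<in> Hpl \<Longrightarrow>
    W a (\<lambda>z. h z + k z) p = W a h p + W a k p"
  using hol_fd[of h p] hol_fd[of k p] by (simp add: W_def algebra_simps)

lemma W_diff: "h holomorphic_on HH \<Longrightarrow> k holomorphic_on HH \<Longrightarrow> p \<in> Hpl \<Longrightarrow>
    W a (\<lambda>z. h z - k z) p = W a h p - W a k p"
  using hol_fd[of h p] hol_fd[of k p] by (simp add: W_def algebra_simps)

lemma W_scale: "h holomorphic_on HH \<Longrightarrow> p \<in> Hpl \<Longrightarrow>
    W a (\<lambda>z. complex_of_real c * h z) p = c *\<^sub>R W a h p"
  using hol_fd[of h p] by (simp add: W_def algebra_simps deriv_cmult scaleR_conv_of_real)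

lemma L2h_zero: "L2h (\<lambda>z. 0)"
  by (simp add: L2h_def set_integrable_def)

lemma L2h_add_gen:
  assumes h: "h holomorphic_on HH" and k: "k holomorphic_on HH" and L: "L2h h" "L2h k"
  shows "L2h (\<lambda>z. h z + k z)"
proof -
  have "continuous_on Hpl (\<lambda>p. (norm (h (emb p) + k (emb p)))\<^sup>2)"
    using cont_comp_emb[OF holo_derivs(3)[OF h]] cont_comp_emb[OF holo_derivs(3)[OF k]]
    by (auto intro!: continuous_intros)
  then have m: "set_borel_measurable lborel Hpl (\<lambda>p. (norm (h (emb p) + k (emb p)))\<^sup>2)"
    using meas_on_Hpl by (simp add: set_borel_measurable_def)
  show ?thesis using minkowski_set(1)[of Hpl "\<lambda>p. h (emb p)" "\<lambda>p. k (emb p)"] L m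
    by (simp add: L2h_def)
qed

lemma L2h_scale:
  assumes L: "L2h h"
  shows "L2h (\<lambda>z. complex_of_real c * h z)"
proof -
  have eq: "(\<lambda>p. (cmod (complex_of_real c * h (emb p)))\<^sup>2) = (\<lambda>p. c\<^sup>2 * (cmod (h (emb p)))\<^sup>2)"
    by (simp add: fun_eq_iff norm_mult power_mult_distrib)
  show ?thesis
  proof (cases "c = 0")
    case True then show ?thesis by (simp add: L2h_def set_integrable_def)
  next
    case False
    then show ?thesis using L eq unfolding L2h_def by simp
  qed
qed

lemma holo_add: "h holomorphic_on HH \<Longrightarrow> k holomorphic_on HH \<Longrightarrow> (\<lambda>z. h z + k z) holomorphic_on HH"
  by (intro holomorphic_intros)

lemma L2h_diff:
  assumes h: "h holomorphic_on HH" and k: "k holomorphic_on HH" and L: "L2h h" "L2h k"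
  shows "L2h (\<lambda>z. h z - k z)"
proof -
  have k': "(\<lambda>z. complex_of_real (-1) * k z) holomorphic_on HH" using k by (intro holomorphic_intros)
  have "L2h (\<lambda>z. h z + complex_of_real (-1) * k z)"
    using L2h_add_gen[OF h k' L(1) L2h_scale[OF L(2)]] .
  then show ?thesis by simp
qed


lemma I1_pointwise:
  "2 * a\<^sup>2 * (cmod (complex_of_real y * d - \<i> * v))\<^sup>2 \<le> 4 * a\<^sup>2 * (y\<^sup>2 * (cmod d)\<^sup>2) + 4 * a\<^sup>2 * (cmod v)\<^sup>2"
proof -
  define A where "A = cmod (complex_of_real y * d)"
  define B where "B = cmod v"
  have "cmod (complex_of_real y * d - \<i> * v) \<le> A + B"
    unfolding A_def B_def using norm_triangle_ineq4[of "complex_of_real y * d" "\<i> * v"]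
    by (simp add: norm_mult)
  then have "(cmod (complex_of_real y * d - \<i> * v))\<^sup>2 \<le> (A + B)\<^sup>2"
    by (intro power_mono) auto
  also have "\<dots> \<le> 2 * A\<^sup>2 + 2 * B\<^sup>2"
  proof -
    have "0 \<le> (A - B)\<^sup>2" by simp
    moreover have "(A - B)\<^sup>2 = A\<^sup>2 - 2 * A * B + B\<^sup>2" "(A + B)\<^sup>2 = A\<^sup>2 + 2 * A * B + B\<^sup>2"
      by (simp_all add: power2_eq_square algebra_simps)
    ultimately show ?thesis by linarith
  qed
  finally have c1: "(cmod (complex_of_real y * d - \<i> * v))\<^sup>2 \<le> 2 * A\<^sup>2 + 2 * B\<^sup>2" .
  have c2: "A\<^sup>2 = y\<^sup>2 * (cmod d)\<^sup>2" by (simp add: A_def norm_mult power_mult_distrib)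
  have "2 * a\<^sup>2 * (cmod (complex_of_real y * d - \<i> * v))\<^sup>2 \<le> 2 * a\<^sup>2 * (2 * A\<^sup>2 + 2 * B\<^sup>2)"
    using c1 by (intro mult_left_mono) auto
  then show ?thesis using c2 unfolding B_def by (simp add: algebra_simps)
qed

definition Cw :: "real \<Rightarrow> real" where "Cw a = 1 + 8 * a\<^sup>2 * (1 + 5 * (32768 / pi))"

lemma Cw_pos: "Cw a > 0"
proof -
  have "0 \<le> 8 * a\<^sup>2 * (1 + 5 * (32768 / pi))" by simp
  then show ?thesis unfolding Cw_def by linarith
qed

lemma W_L2_bound:
  assumes h: "h holomorphic_on HH" and L: "L2h h"
  shows "(LINT p:Hpl|lborel. (norm (W a h p))\<^sup>2) \<le> Cw a * (LINT p:Hpl|lborel. (cmod (h (emb p)))\<^sup>2)"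
proof -
  note G = global_deriv[OF h L[unfolded L2h_def]]
  define I0 where "I0 p = (cmod (h (emb p)))\<^sup>2" for p
  define D where "D p = (snd p)\<^sup>2 * (cmod (deriv h (emb p)))\<^sup>2" for p
  have i0: "set_integrable lborel Hpl I0" using L by (simp add: L2h_def I0_def[abs_def])
  have iD: "set_integrable lborel Hpl D" using G(1) by (simp add: D_def[abs_def])
  have iW: "set_integrable lborel Hpl (\<lambda>p. (norm (W a h p))\<^sup>2)"
  proof -
    have "set_integrable lborel Hpl (\<lambda>p. 2 * a\<^sup>2 * (cmod (complex_of_real (snd p) * deriv h (emb p) - \<i> * h (emb p)))\<^sup>2)"
      using Def_int[OF h L] .
    then show ?thesis using i0 unfolding norm_W_sq I0_def[abs_def]
      by (intro set_integral_add set_integrable_mult_right) auto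
  qed
  have "(LINT p:Hpl|lborel. (norm (W a h p))\<^sup>2) \<le> (LINT p:Hpl|lborel. (1 + 8 * a\<^sup>2) * I0 p + 8 * a\<^sup>2 * D p)"
  proof (rule set_integral_mono[OF iW])
    show "set_integrable lborel Hpl (\<lambda>p. (1 + 8 * a\<^sup>2) * I0 p + 8 * a\<^sup>2 * D p)"
      using i0 iD by (intro set_integral_add set_integrable_mult_right) auto
    fix p
    show "(norm (W a h p))\<^sup>2 \<le> (1 + 8 * a\<^sup>2) * I0 p + 8 * a\<^sup>2 * D p"
      using I1_pointwise[of a "snd p" "deriv h (emb p)" "h (emb p)"]
      unfolding norm_W_sq I0_def D_def by (simp add: algebra_simps)
  qed
  also have "\<dots> = (1 + 8 * a\<^sup>2) * (LINT p:Hpl|lborel. I0 p) + 8 * a\<^sup>2 * (LINT p:Hpl|lborel. D p)"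
    using i0 iD by (simp add: set_integral_add(2) set_integrable_mult_right)
  also have "\<dots> \<le> (1 + 8 * a\<^sup>2) * (LINT p:Hpl|lborel. I0 p) + 8 * a\<^sup>2 * ((5 * (32768 / pi)) * (LINT p:Hpl|lborel. I0 p))"
    using G(2) by (intro add_left_mono mult_left_mono) (auto simp: D_def I0_def)
  also have "\<dots> = Cw a * (LINT p:Hpl|lborel. I0 p)" by (simp add: Cw_def algebra_simps)
  finally show ?thesis by (simp add: I0_def)
qed

lemma L2_le_W:
  assumes h: "h holomorphic_on HH" and L: "L2h h"
  shows "(LINT p:Hpl|lborel. (cmod (h (emb p)))\<^sup>2) \<le> (LINT p:Hpl|lborel. (norm (W a h p))\<^sup>2)"
proof (rule set_integral_mono)
  show "set_integrable lborel Hpl (\<lambda>p. (cmod (h (emb p)))\<^sup>2)" using L by (simp add: L2h_def)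
  show "set_integrable lborel Hpl (\<lambda>p. (norm (W a h p))\<^sup>2)"
  proof -
    have "set_integrable lborel Hpl (\<lambda>p. 2 * a\<^sup>2 * (cmod (complex_of_real (snd p) * deriv h (emb p) - \<i> * h (emb p)))\<^sup>2)"
      using Def_int[OF h L] .
    then show ?thesis using L unfolding norm_W_sq L2h_def
      by (intro set_integral_add set_integrable_mult_right) auto
  qed
  fix p show "(cmod (h (emb p)))\<^sup>2 \<le> (norm (W a h p))\<^sup>2" unfolding norm_W_sq by simp
qed

lemma LINT_nonneg_Hpl:
  fixes f :: "real \<times> real \<Rightarrow> real"
  assumes "\<And>p. 0 \<le> f p"
  shows "0 \<le> (LINT p:Hpl|lborel. f p)"
  unfolding set_lebesgue_integral_def
  by (intro Bochner_Integration.integral_nonneg) (use assms in \<open>auto simp: indicator_def\<close>)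


lemma FF_obtain:
  assumes "a > 0" "u \<in> FF a"
  obtains h where "h holomorphic_on HH" "rep h u" "L2h h"
  using FF_char[OF assms(1)] assms(2) by blast

lemma part_zero_mem: "a > 0 \<Longrightarrow> (\<lambda>_. 0) \<in> FF a"
  using FF_char[of a "\<lambda>_. 0"] rep_zero L2h_zero by (auto simp: zero_prod_def)

lemma part_add_mem:
  assumes a: "a > 0" and u: "u \<in> FF a" and v: "v \<in> FF a"
  shows "(\<lambda>p. u p + v p) \<in> FF a"
proof -
  obtain h where h: "h holomorphic_on HH" "rep h u" "L2h h" using FF_obtain[OF a u] .
  obtain k where k: "k holomorphic_on HH" "rep k v" "L2h k" using FF_obtain[OF a v] .
  show ?thesis unfolding FF_char[OF a]
    using holo_add[OF h(1) k(1)] rep_add[OF h(2) k(2)] L2h_add_gen[OF h(1) k(1) h(3) k(3)] by blast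
qed

lemma part_scale_mem:
  assumes a: "a > 0" and u: "u \<in> FF a"
  shows "(\<lambda>p. c *\<^sub>R u p) \<in> FF a"
proof -
  obtain h where h: "h holomorphic_on HH" "rep h u" "L2h h" using FF_obtain[OF a u] .
  have "(\<lambda>z. complex_of_real c * h z) holomorphic_on HH" using h(1) by (intro holomorphic_intros)
  then show ?thesis unfolding FF_char[OF a]
    using rep_scale[OF h(2)] L2h_scale[OF h(3)] by blast
qed

lemma part_finite:
  assumes a: "a > 0" and u: "u \<in> FF a"
  shows "in_L2 a u \<and> Def_in_L2 a u"
proof -
  obtain h where h: "h holomorphic_on HH" "rep h u" "L2h h" using FF_obtain[OF a u] .
  show ?thesis using H1_formula[OF a h] by blast
qed

lemma part_zero:
  assumes a: "a > 0" and u: "u \<in> FF a" and z: "H1norm a u = 0"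
  shows "u = (\<lambda>_. 0)"
proof -
  obtain h where h: "h holomorphic_on HH" "rep h u" "L2h h" using FF_obtain[OF a u] .
  note HF = H1_formula[OF a h]
  have "(LINT p:Hpl|lborel. (norm (W a h p))\<^sup>2) = 0" using z HF(4) by simp
  then have L0: "(LINT p:Hpl|lborel. (cmod (h (emb p)))\<^sup>2) \<le> 0" using L2_le_W[OF h(1) h(3), of a] by simp
  have hz: "h (emb p) = 0" if p: "p \<in> Hpl" for p
  proof -
    obtain x y where xy: "p = (x, y)" by (cases p)
    have y: "y > 0" using p xy by (simp add: Hpl_def)
    have "(cmod (h (Complex x y)))\<^sup>2 \<le> 2 / (pi * (y / 4)\<^sup>2) * (LINT p:Hpl|lborel. (cmod (h (emb p)))\<^sup>2)"
      by (rule pointwise_L2_H[OF h(1)]) (use y h(3) in \<open>auto simp: L2h_def\<close>)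
    also have "\<dots> \<le> 0" using L0 y by (intro mult_nonneg_nonpos) auto
    finally have "cmod (h (Complex x y)) = 0" by simp
    then show ?thesis by (simp add: xy emb_def)
  qed
  show ?thesis using h(2) hz by (auto simp: rep_def fun_eq_iff zero_prod_def)
qed

lemma part_scale_norm:
  assumes a: "a > 0" and u: "u \<in> FF a"
  shows "H1norm a (\<lambda>p. c *\<^sub>R u p) = \<bar>c\<bar> * H1norm a u"
proof -
  obtain h where h: "h holomorphic_on HH" "rep h u" "L2h h" using FF_obtain[OF a u] .
  have hc: "(\<lambda>z. complex_of_real c * h z) holomorphic_on HH" using h(1) by (intro holomorphic_intros)
  note F1 = H1_formula[OF a h] and F2 = H1_formula[OF a hc rep_scale[OF h(2)] L2h_scale[OF h(3)]]
  have "(LINT p:Hpl|lborel. (norm (W a (\<lambda>z. complex_of_real c * h z) p))\<^sup>2) =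
        (LINT p:Hpl|lborel. c\<^sup>2 * (norm (W a h p))\<^sup>2)"
    by (rule set_int_cong_Hpl(2)) (simp add: W_scale[OF h(1)] power_mult_distrib)
  also have "\<dots> = c\<^sup>2 * (LINT p:Hpl|lborel. (norm (W a h p))\<^sup>2)" by simp
  finally show ?thesis unfolding F1(4) F2(4) by (simp add: real_sqrt_mult)
qed

lemma part_triangle:
  assumes a: "a > 0" and u: "u \<in> FF a" and v: "v \<in> FF a"
  shows "H1norm a (\<lambda>p. u p + v p) \<le> H1norm a u + H1norm a v"
proof -
  obtain h where h: "h holomorphic_on HH" "rep h u" "L2h h" using FF_obtain[OF a u] .
  obtain k where k: "k holomorphic_on HH" "rep k v" "L2h k" using FF_obtain[OF a v] .
  note F1 = H1_formula[OF a h] and F2 = H1_formula[OF a k]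
    and F3 = H1_formula[OF a holo_add[OF h(1) k(1)] rep_add[OF h(2) k(2)] L2h_add_gen[OF h(1) k(1) h(3) k(3)]]
  have eq: "(LINT p:Hpl|lborel. (norm (W a (\<lambda>z. h z + k z) p))\<^sup>2) =
        (LINT p:Hpl|lborel. (norm (W a h p + W a k p))\<^sup>2)"
    by (rule set_int_cong_Hpl(2)) (simp add: W_add[OF h(1) k(1)])
  have m: "set_borel_measurable lborel Hpl (\<lambda>p. (norm (W a h p + W a k p))\<^sup>2)"
  proof -
    have "continuous_on Hpl (\<lambda>p. (norm (W a h p + W a k p))\<^sup>2)"
      using cont_W[OF h(1), of a] cont_W[OF k(1), of a] by (auto intro!: continuous_intros)
    then show ?thesis using meas_on_Hpl by (simp add: set_borel_measurable_def)
  qed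
  show ?thesis unfolding F1(4) F2(4) F3(4) eq
    by (rule minkowski_set(2)[OF F1(3) F2(3) m])
qed


lemma part_complete:
  assumes a: "a > 0" and X: "\<forall>n. X n \<in> FF a"
    and C: "\<forall>e>0. \<exists>N. \<forall>m\<ge>N. \<forall>n\<ge>N. H1norm a (\<lambda>p. X m p - X n p) < e"
  shows "\<exists>u\<in>FF a. (\<lambda>n. H1norm a (\<lambda>p. X n p - u p)) \<longlonglongrightarrow> 0"
proof -
  have "\<forall>n. \<exists>h. h holomorphic_on HH \<and> rep h (X n) \<and> L2h h" using X FF_char[OF a] by blast
  then obtain h where hn: "\<And>n. h n holomorphic_on HH" "\<And>n. rep (h n) (X n)" "\<And>n. L2h (h n)" by metis
  define LL where "LL m n = (LINT p:Hpl|lborel. (cmod (h m (emb p) - h n (emb p)))\<^sup>2)" for m n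
  have hd: "(\<lambda>z. h m z - h n z) holomorphic_on HH" for m n using hn(1) by (intro holomorphic_intros)
  have Ld: "L2h (\<lambda>z. h m z - h n z)" for m n using L2h_diff[OF hn(1) hn(1) hn(3) hn(3)] .
  have l_le: "LL m n \<le> (H1norm a (\<lambda>p. X m p - X n p))\<^sup>2" for m n
  proof -
    note F = H1_formula[OF a hd rep_diff[OF hn(2) hn(2)] Ld, of m n]
    have W0: "0 \<le> (LINT p:Hpl|lborel. (norm (W a (\<lambda>z. h m z - h n z) p))\<^sup>2)"
      by (rule LINT_nonneg_Hpl) simp
    show ?thesis unfolding F(4) LL_def using L2_le_W[OF hd Ld, of m n a] W0 by simp
  qed
  have hnn: "0 \<le> H1norm a (\<lambda>p. X m p - X n p)" for m n
  proof -
    note F = H1_formula[OF a hd rep_diff[OF hn(2) hn(2)] Ld, of m n]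
    have W0: "0 \<le> (LINT p:Hpl|lborel. (norm (W a (\<lambda>z. h m z - h n z) p))\<^sup>2)"
      by (rule LINT_nonneg_Hpl) simp
    show ?thesis unfolding F(4) using W0 by simp
  qed
  have Lc: "\<exists>N. \<forall>m\<ge>N. \<forall>n\<ge>N. LL m n < e" if e: "e > 0" for e
  proof -
    obtain N where N: "\<forall>m\<ge>N. \<forall>n\<ge>N. H1norm a (\<lambda>p. X m p - X n p) < sqrt e"
      using C e by (meson real_sqrt_gt_zero)
    have "LL m n < e" if "m \<ge> N" "n \<ge> N" for m n
    proof -
      have h0: "0 \<le> H1norm a (\<lambda>p. X m p - X n p)" by (rule hnn)
      have "(H1norm a (\<lambda>p. X m p - X n p))\<^sup>2 < (sqrt e)\<^sup>2"
        using N that h0 by (intro power_strict_mono) auto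
      then show ?thesis using l_le[of m n] e by simp
    qed
    then show ?thesis by blast
  qed
  have pw: "(cmod (h m w - h n w))\<^sup>2 \<le> 2 / (pi * r\<^sup>2) * LL m n"
    if "0 < r" "0 < Im w - 2 * r" for m n w r
    using pointwise_L2_H[OF hd[of m n] that, of "Re w"] Ld[of m n] by (simp add: L2h_def LL_def)
  have cb: "cball z (Im z / 8) \<subseteq> {w. Im z - Im z / 8 \<le> Im w}" for z
  proof
    fix w assume "w \<in> cball z (Im z / 8)"
    then have "\<bar>Im (z - w)\<bar> \<le> Im z / 8" using abs_Im_le_cmod[of "z - w"] by (simp add: dist_norm)
    then show "w \<in> {w. Im z - Im z / 8 \<le> Im w}" by (simp add: abs_if split: if_splits)
  qed
  have cbH: "cball z (Im z / 8) \<subseteq> HH" if "z \<in> HH" for z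
    using cb[of z] that by (force simp: HH_def)
  have uC: "uniformly_Cauchy_on (cball z (Im z / 8)) h" if z: "z \<in> HH" for z
  proof (rule uniformly_Cauchy_onI)
    fix e :: real assume e: "e > 0"
    define r where "r = Im z / 4"
    have r: "r > 0" using z by (simp add: r_def HH_def)
    have e': "e\<^sup>2 * (pi * r\<^sup>2) / 2 > 0" using e r by simp
    obtain N where N: "\<forall>m\<ge>N. \<forall>n\<ge>N. LL m n < e\<^sup>2 * (pi * r\<^sup>2) / 2" using Lc[OF e'] by blast
    have "dist (h m w) (h n w) < e" if w: "w \<in> cball z (Im z / 8)" and mn: "m \<ge> N" "n \<ge> N" for w m n
    proof -
      have "0 < Im w - 2 * r" using cb[of z] w z by (auto simp: r_def HH_def)
      then have "(cmod (h m w - h n w))\<^sup>2 \<le> 2 / (pi * r\<^sup>2) * LL m n" using pw r by blast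
      also have "\<dots> < 2 / (pi * r\<^sup>2) * (e\<^sup>2 * (pi * r\<^sup>2) / 2)"
        using N mn r by (intro mult_strict_left_mono) auto
      also have "\<dots> = e\<^sup>2" using r by (simp add: field_simps)
      finally have "(cmod (h m w - h n w))\<^sup>2 < e\<^sup>2" .
      then have "cmod (h m w - h n w) < e" using e by (simp add: power_less_imp_less_base)
      then show ?thesis by (simp add: dist_norm)
    qed
    then show "\<exists>M. \<forall>x\<in>cball z (Im z / 8). \<forall>m\<ge>M. \<forall>n\<ge>M. dist (h m x) (h n x) < e" by blast
  qed
  define G where "G w = lim (\<lambda>n. h n w)" for w
  have ul: "uniform_limit (cball z (Im z / 8)) h G sequentially" if z: "z \<in> HH" for z
  proof -
    obtain l where l: "uniform_limit (cball z (Im z / 8)) h l sequentially"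
      using Cauchy_uniformly_convergent[OF uC[OF z]] unfolding uniformly_convergent_on_def by blast
    have lG: "l x = G x" if "x \<in> cball z (Im z / 8)" for x
      using tendsto_uniform_limitI[OF l that] by (simp add: G_def limI)
    have "uniform_limit (cball z (Im z / 8)) h l sequentially \<longleftrightarrow> uniform_limit (cball z (Im z / 8)) h G sequentially"
      by (rule uniform_limit_cong) (use lG in auto)
    then show ?thesis using l by simp
  qed
  have Ghol: "G holomorphic_on HH"
  proof (rule holomorphic_uniform_sequence[OF open_HH hn(1)])
    fix x assume x: "x \<in> HH"
    show "\<exists>d>0. cball x d \<subseteq> HH \<and> uniform_limit (cball x d) h G sequentially"
      using x cbH[OF x] ul[OF x] by (intro exI[of _ "Im x / 8"]) (auto simp: HH_def)
  qed
  have conv: "(\<lambda>n. h n w) \<longlonglongrightarrow> G w" if w: "w \<in> HH" for w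
    by (rule tendsto_uniform_limitI[OF ul[OF w]]) (use w in \<open>auto simp: HH_def\<close>)
  have cG: "continuous_on HH G" using Ghol holomorphic_on_imp_continuous_on by blast
  have fatou: "(\<integral>\<^sup>+ p. ennreal (indicator Hpl p * (cmod (h n (emb p) - G (emb p)))\<^sup>2) \<partial>lborel) \<le> ennreal e"
    if N: "\<forall>m\<ge>N. LL n m < e" for n N e
  proof -
    define fm where "fm m p = ennreal (indicator Hpl p * (cmod (h n (emb p) - h m (emb p)))\<^sup>2)" for m p
    have meas: "fm m \<in> borel_measurable lborel" for m
    proof -
      have "continuous_on Hpl (\<lambda>p. (cmod (h n (emb p) - h m (emb p)))\<^sup>2)"
        using cont_comp_emb[OF holo_derivs(3)[OF hn(1)[of n]]] cont_comp_emb[OF holo_derivs(3)[OF hn(1)[of m]]]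
        by (auto intro!: continuous_intros)
      then have "(\<lambda>p. indicator Hpl p * (cmod (h n (emb p) - h m (emb p)))\<^sup>2) \<in> borel_measurable lborel"
        by (rule meas_on_Hpl)
      then show ?thesis unfolding fm_def[abs_def] by (rule measurable_compose[OF _ measurable_ennreal])
    qed
    have lim: "(\<lambda>m. fm m p) \<longlonglongrightarrow> ennreal (indicator Hpl p * (cmod (h n (emb p) - G (emb p)))\<^sup>2)" for p
    proof (cases "p \<in> Hpl")
      case True
      have "(\<lambda>m. h m (emb p)) \<longlonglongrightarrow> G (emb p)" using conv True by simp
      then have "(\<lambda>m. (cmod (h n (emb p) - h m (emb p)))\<^sup>2) \<longlonglongrightarrow> (cmod (h n (emb p) - G (emb p)))\<^sup>2"
        by (intro tendsto_intros)
      then show ?thesis using True unfolding fm_def by (simp add: tendsto_ennrealI)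
    next
      case False then show ?thesis by (simp add: fm_def)
    qed
    have eqm: "(\<integral>\<^sup>+ p. fm m p \<partial>lborel) = ennreal (LL n m)" for m
    proof -
      have int: "integrable lborel (\<lambda>p. indicator Hpl p * (cmod (h n (emb p) - h m (emb p)))\<^sup>2)"
        using Ld[of n m] by (simp add: L2h_def set_integrable_def)
      have "(\<integral>\<^sup>+ p. fm m p \<partial>lborel) = ennreal (integral\<^sup>L lborel (\<lambda>p. indicator Hpl p * (cmod (h n (emb p) - h m (emb p)))\<^sup>2))"
        unfolding fm_def by (rule nn_integral_eq_integral[OF int]) simp
      then show ?thesis by (simp add: LL_def set_lebesgue_integral_def)
    qed
    have "(\<integral>\<^sup>+ p. ennreal (indicator Hpl p * (cmod (h n (emb p) - G (emb p)))\<^sup>2) \<partial>lborel) =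
        (\<integral>\<^sup>+ p. liminf (\<lambda>m. fm m p) \<partial>lborel)"
      by (intro nn_integral_cong) (simp add: lim_imp_Liminf[OF _ lim])
    also have "\<dots> \<le> liminf (\<lambda>m. \<integral>\<^sup>+ p. fm m p \<partial>lborel)"
      by (rule nn_integral_liminf[OF meas])
    also have "\<dots> = liminf (\<lambda>m. ennreal (LL n m))" by (simp add: eqm)
    also have "\<dots> \<le> ennreal e"
      by (rule Liminf_le) (use N in \<open>auto simp: eventually_sequentially intro!: ennreal_leI exI[of _ N]\<close>)
    finally show ?thesis .
  qed
  have fin: "L2h (\<lambda>z. h n z - G z) \<and> (LINT p:Hpl|lborel. (cmod (h n (emb p) - G (emb p)))\<^sup>2) \<le> e"
    if N: "\<forall>m\<ge>N. LL n m < e" and e: "e > 0" for n N e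
  proof -
    define g where "g p = indicator Hpl p * (cmod (h n (emb p) - G (emb p)))\<^sup>2" for p
    have gm: "g \<in> borel_measurable lborel"
    proof -
      have "continuous_on Hpl (\<lambda>p. (cmod (h n (emb p) - G (emb p)))\<^sup>2)"
        using cont_comp_emb[OF holo_derivs(3)[OF hn(1)[of n]]] cont_comp_emb[OF cG]
        by (auto intro!: continuous_intros)
      then show ?thesis unfolding g_def[abs_def] by (rule meas_on_Hpl)
    qed
    have b: "(\<integral>\<^sup>+ p. ennreal (g p) \<partial>lborel) \<le> ennreal e" using fatou[OF N] by (simp add: g_def)
    have gi: "integrable lborel g"
      by (rule integrableI_nonneg[OF gm]) (use b in \<open>auto simp: g_def top.not_eq_extremum intro: le_less_trans\<close>)
    have "L2h (\<lambda>z. h n z - G z)" using gi by (simp add: L2h_def set_integrable_def g_def[abs_def])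
    moreover have "integral\<^sup>L lborel g = enn2real (\<integral>\<^sup>+ p. ennreal (g p) \<partial>lborel)"
      by (rule integral_eq_nn_integral[OF gm]) (simp add: g_def)
    moreover have "enn2real (\<integral>\<^sup>+ p. ennreal (g p) \<partial>lborel) \<le> enn2real (ennreal e)"
      by (rule enn2real_mono[OF b]) simp
    ultimately show ?thesis using e by (simp add: set_lebesgue_integral_def g_def[abs_def])
  qed
  obtain N1 where N1: "\<forall>m\<ge>N1. \<forall>n\<ge>N1. LL m n < 1" using Lc[of 1] by auto
  have "L2h (\<lambda>z. h N1 z - G z)" using fin[of N1 N1 1] N1 by auto
  moreover have "(\<lambda>z. h N1 z - G z) holomorphic_on HH" using hn(1) Ghol by (intro holomorphic_intros)
  ultimately have "L2h (\<lambda>z. h N1 z - (h N1 z - G z))" using L2h_diff[OF hn(1) _ hn(3)] by blast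
  then have LG: "L2h G" by simp
  define u where "u p = (if p \<in> Hpl then (Re (G (emb p)), - Im (G (emb p))) else (0, 0))" for p
  have ru: "rep G u" by (simp add: rep_def u_def)
  have uF: "u \<in> FF a" unfolding FF_char[OF a] using Ghol ru LG by blast
  have hG: "(\<lambda>z. h n z - G z) holomorphic_on HH" for n using hn(1) Ghol by (intro holomorphic_intros)
  have LhG: "L2h (\<lambda>z. h n z - G z)" for n using L2h_diff[OF hn(1) Ghol hn(3) LG] .
  have "(\<lambda>n. H1norm a (\<lambda>p. X n p - u p)) \<longlonglongrightarrow> 0"
  proof (rule LIMSEQ_I)
    fix r :: real assume r: "0 < r"
    define e where "e = r\<^sup>2 / (2 * Cw a)"
    have e: "e > 0" using r Cw_pos[of a] by (simp add: e_def)
    obtain N where N: "\<forall>m\<ge>N. \<forall>n\<ge>N. LL m n < e" using Lc[OF e] by blast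
    have "norm (H1norm a (\<lambda>p. X n p - u p) - 0) < r" if n: "n \<ge> N" for n
    proof -
      note F = H1_formula[OF a hG rep_diff[OF hn(2) ru] LhG, of n]
      have fn: "(LINT p:Hpl|lborel. (cmod (h n (emb p) - G (emb p)))\<^sup>2) \<le> e"
        using fin[of N n e] N n e by auto
      have W0: "0 \<le> (LINT p:Hpl|lborel. (norm (W a (\<lambda>z. h n z - G z) p))\<^sup>2)"
        by (rule LINT_nonneg_Hpl) simp
      have "(LINT p:Hpl|lborel. (norm (W a (\<lambda>z. h n z - G z) p))\<^sup>2) \<le>
          Cw a * (LINT p:Hpl|lborel. (cmod (h n (emb p) - G (emb p)))\<^sup>2)"
        using W_L2_bound[OF hG LhG, of a] by simp
      also have "\<dots> \<le> Cw a * e" using fn Cw_pos[of a] by (intro mult_left_mono) auto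
      also have "\<dots> = r\<^sup>2 / 2" using Cw_pos[of a] by (simp add: e_def)
      also have "\<dots> < r\<^sup>2" using r by simp
      finally have "sqrt (LINT p:Hpl|lborel. (norm (W a (\<lambda>z. h n z - G z) p))\<^sup>2) < sqrt (r\<^sup>2)"
        by (rule real_sqrt_less_mono)
      then show ?thesis unfolding F(4) using W0 r by simp
    qed
    then show "\<exists>no. \<forall>n\<ge>no. norm (H1norm a (\<lambda>p. X n p - u p) - 0) < r" by blast
  qed
  then show ?thesis using uF by blast
qed


theorem lemma3p5:
  fixes a :: real
  assumes "a > 0"
  shows
    "\<comment> \<open>F is a vector space\<close>
     (\<lambda>_. 0) \<in> FF a \<and>
     (\<forall>u\<in>FF a. \<forall>v\<in>FF a. (\<lambda>p. u p + v p) \<in> FF a) \<and>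
     (\<forall>u\<in>FF a. \<forall>c::real. (\<lambda>p. c *\<^sub>R u p) \<in> FF a) \<and>
     \<comment> \<open>the H^1 norm is finite on F\<close>
     (\<forall>u\<in>FF a. in_L2 a u \<and> Def_in_L2 a u) \<and>
     \<comment> \<open>it is a norm on F\<close>
     (\<forall>u\<in>FF a. H1norm a u = 0 \<longrightarrow> u = (\<lambda>_. 0)) \<and>
     (\<forall>u\<in>FF a. \<forall>c::real. H1norm a (\<lambda>p. c *\<^sub>R u p) = \<bar>c\<bar> * H1norm a u) \<and>
     (\<forall>u\<in>FF a. \<forall>v\<in>FF a. H1norm a (\<lambda>p. u p + v p) \<le> H1norm a u + H1norm a v) \<and>
     \<comment> \<open>completeness\<close>
     (\<forall>X. (\<forall>n. X n \<in> FF a) \<and>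
          (\<forall>e>0. \<exists>N. \<forall>m\<ge>N. \<forall>n\<ge>N. H1norm a (\<lambda>p. X m p - X n p) < e) \<longrightarrow>
          (\<exists>u\<in>FF a. (\<lambda>n. H1norm a (\<lambda>p. X n p - u p)) \<longlonglongrightarrow> 0))"
  proof (intro conjI)
  show "(\<lambda>_. 0) \<in> FF a" by (rule part_zero_mem[OF assms])
  show "\<forall>u\<in>FF a. \<forall>v\<in>FF a. (\<lambda>p. u p + v p) \<in> FF a"
    using part_add_mem[OF assms] by blast
  show "\<forall>u\<in>FF a. \<forall>c::real. (\<lambda>p. c *\<^sub>R u p) \<in> FF a"
    using part_scale_mem[OF assms] by blast
  show "\<forall>u\<in>FF a. in_L2 a u \<and> Def_in_L2 a u"
    using part_finite[OF assms] by blast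
  show "\<forall>u\<in>FF a. H1norm a u = 0 \<longrightarrow> u = (\<lambda>_. 0)"
    using part_zero[OF assms] by blast
  show "\<forall>u\<in>FF a. \<forall>c::real. H1norm a (\<lambda>p. c *\<^sub>R u p) = \<bar>c\<bar> * H1norm a u"
    using part_scale_norm[OF assms] by blast
  show "\<forall>u\<in>FF a. \<forall>v\<in>FF a. H1norm a (\<lambda>p. u p + v p) \<le> H1norm a u + H1norm a v"
    using part_triangle[OF assms] by blast
  show "\<forall>X. (\<forall>n. X n \<in> FF a) \<and>
          (\<forall>e>0. \<exists>N. \<forall>m\<ge>N. \<forall>n\<ge>N. H1norm a (\<lambda>p. X m p - X n p) < e) \<longrightarrow>
          (\<exists>u\<in>FF a. (\<lambda>n. H1norm a (\<lambda>p. X n p - u p)) \<longlonglongrightarrow> 0)"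
    using part_complete[OF assms] by blast
qed

end
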